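(* Let $\Sigma$ be an extended vocabulary which contains a unary set predicate name $\mathsf{SET}$ and does not contain the binary relation name $\mathsf{ancestor}$. There exists a non-deterministic overlay $\mathrm{CMSO}[2]$-transduction $\tau$ with the following property. Let $(U,\mathcal{S})$ be a laminar set system, represented as the $\{\mathsf{SET}\}$-structure $\mathbb{S}$, and let $T$ be the laminar tree of $(U,\mathcal{S})$ (with $L(T)=U$). Let $\mathbb{A}$ be any $\Sigma$-structure with $\mathbb{S}\sqsubseteq\mathbb{A}$. Then $\tau(\mathbb{A})$ is non-empty, and every output in $\tau(\mathbb{A})$ is equal to $\mathbb{A}\sqcup\mathbb{T}$ for some $\{\mathsf{ancestor}\}$-structure $\mathbb{T}$ representing $T$.
   Context: Structures. An extended vocabulary is a finite set of symbols, each a relation name or a set predicate name, with an arity. A $\Sigma$-structure $\mathbb{A}$ consists of a finite universe $U_{\mathbb{A}}$, for each relation name $R\in\Sigma$ of arity $k$ a $k$-ary relation $R_{\mathbb{A}}$ on $U_{\mathbb{A}}$, and for each set predicate name $P\in\Sigma$ of arity $k$ a $k$-ary relation $P_{\mathbb{A}}$ on subsets of $U_{\mathbb{A}}$. For a $\Sigma$-structure $\mathbb{A}$ and a $\Gamma$-structure $\mathbb{B}$: $\mathbb{A}\sqsubseteq\mathbb{B}$ means $\Sigma\subseteq\Gamma$, $U_{\mathbb{A}}\subseteq U_{\mathbb{B}}$ and $Q_{\mathbb{A}}=Q_{\mathbb{B}}$ for all $Q\in\Sigma$; $\mathbb{A}\sqcup\mathbb{B}$ is the $(\Sigma\cup\Gamma)$-structure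 with universe $U_{\mathbb{A}}\cup U_{\mathbb{B}}$ interpreting symbols of $\Sigma\setminus\Gamma$ as in $\mathbb{A}$, of $\Gamma\setminus\Sigma$ as in $\mathbb{B}$, and of $\Sigma\cap\Gamma$ as $Q_{\mathbb{A}}\cup Q_{\mathbb{B}}$. Logic and transductions. $\mathrm{CMSO}[2]$ is monadic second-order logic over such structures (quantification over elements and subsets of the universe; atomic formulas from equality, membership, the relations and set predicates) extended with a unary set predicate true of a set iff its size is even. A $\Sigma$-to-$\Gamma$ transduction is a set $\tau$ of pairs (input $\Sigma$-structure, output $\Gamma$-structure); $\tau(\mathbb{A})$ is the set of outputs on input $\mathbb{A}$; $\tau$ is an overlay transduction if $\mathbb{A}\sqsubseteq\mathbb{B}$ for all $(\mathbb{A},\mathbb{B})\in\tau$. A $\mathrm{CMSO}[2]$-transduction is a finite composition of atomic transductions: filtering (keep the input unchanged iff it satisfies a fixed sentence); universe restriction (restrict universe and all relations/predicates to the elements satisfying a fixed formula with one free first-order variable); interpretation (same universe, each output symbol $Q$ interpreted as the tuples satisfying a fixed formula with $\mathrm{ar}(Q)$ free variables, first-order for relation names, monadic for set predicate names); copying (for fixed $k$, add $k$ fresh copies of every element and binary relations $\mathsf{copy}_i$, $i\in[k]$, relating each original element to its $i$-th copy, keeping original interpretations); colouring (add a new unary relation interpreted as an arbitrary subset of the universe, every choice yielding an output). It is non-deterministic if it uses colouring. Set systems. A set system is a pair $(U,\mathcal{S})$ with $U$ finite and $\mathcal{S}$ a family of subsets of $U$ such that $\emptyset\notin\mathcal{S}$,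 $U\in\mathcal{S}$, and $\{a\}\in\mathcal{S}$ for every $a\in U$; it is represented as the $\{\mathsf{SET}\}$-structure with universe $U$ and unary set predicate $\mathsf{SET}$ interpreted as $\mathcal{S}$. Two sets overlap if they intersect and neither contains the other; $(U,\mathcal{S})$ is laminar if no two members of $\mathcal{S}$ overlap. The laminar tree of a laminar $(U,\mathcal{S})$ is the rooted tree whose nodes are the members of $\mathcal{S}$, with root $U$, where $X$ is a child of $Y$ iff $X\subsetneq Y$ and no member of $\mathcal{S}$ lies strictly between them; its leaves are the singletons, identified with the elements of $U$, so $L(T)=U$. A rooted tree $T$ with $L(T)=U$ is represented by an $\{\mathsf{ancestor}\}$-structure with universe $V(T)$ (containing $U$ as the leaves) in which $\mathsf{ancestor}(u,v)$ holds iff $u$ is an ancestor of $v$ (every node is its own ancestor). *)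

theory Defs
  imports Main
begin

datatype symbol = RelSym string nat | SetSym string nat

fun arity :: "symbol \<Rightarrow> nat" where
  "arity (RelSym _ k) = k"
| "arity (SetSym _ k) = k"

fun is_rel :: "symbol \<Rightarrow> bool" where
  "is_rel (RelSym _ _) = True"
| "is_rel (SetSym _ _) = False"

record 'e struct =
  univ :: "'e set"
  voc  :: "symbol set"
  rels :: "symbol \<Rightarrow> 'e list set"
  sets :: "symbol \<Rightarrow> 'e set list set"

text \<open>Well-formed structures over vocabulary \<open>\<Sigma>\<close>; symbols outside the vocabulary
  (and set predicates in the relation field / vice versa) are interpreted as empty,
  so that record equality is equality of structures.\<close>
definition is_structure :: "symbol set \<Rightarrow> 'e struct \<Rightarrow> bool" where
  "is_structure \<Sigma> A \<longleftrightarrow>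
     finite \<Sigma> \<and> voc A = \<Sigma> \<and> finite (univ A) \<and>
     (\<forall>Q. Q \<notin> \<Sigma> \<or> \<not> is_rel Q \<longrightarrow> rels A Q = {}) \<and>
     (\<forall>Q. Q \<notin> \<Sigma> \<or> is_rel Q \<longrightarrow> sets A Q = {}) \<and>
     (\<forall>Q\<in>\<Sigma>. is_rel Q \<longrightarrow> (\<forall>xs\<in>rels A Q. length xs = arity Q \<and> set xs \<subseteq> univ A)) \<and>
     (\<forall>Q\<in>\<Sigma>. \<not> is_rel Q \<longrightarrow> (\<forall>Xs\<in>sets A Q. length Xs = arity Q \<and> (\<forall>X\<in>set Xs. X \<subseteq> univ A)))"

definition substruct :: "'e struct \<Rightarrow> 'e struct \<Rightarrow> bool" where
  "substruct A B \<longleftrightarrow> voc A \<subseteq> voc B \<and> univ A \<subseteq> univ B \<and>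
     (\<forall>Q\<in>voc A. rels A Q = rels B Q \<and> sets A Q = sets B Q)"

definition join :: "'e struct \<Rightarrow> 'e struct \<Rightarrow> 'e struct" where
  "join A B = \<lparr> univ = univ A \<union> univ B, voc = voc A \<union> voc B,
     rels = (\<lambda>Q. if Q \<in> voc A \<and> Q \<in> voc B then rels A Q \<union> rels B Q
                 else if Q \<in> voc A then rels A Q else if Q \<in> voc B then rels B Q else {}),
     sets = (\<lambda>Q. if Q \<in> voc A \<and> Q \<in> voc B then sets A Q \<union> sets B Q
                 else if Q \<in> voc A then sets A Q else if Q \<in> voc B then sets B Q else {}) \<rparr>"

text \<open>First-order variables and monadic (set) variables are both indexed by naturals,
  in separate name spaces.\<close>
datatype form =
    Eq nat nat
  | Mem nat nat
  | RelAtom symbol "nat list"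
  | SetAtom symbol "nat list"
  | Even nat
  | Neg form
  | Conj form form
  | ExFO nat form
  | ExSO nat form

fun fo_free :: "form \<Rightarrow> nat set" where
  "fo_free (Eq x y) = {x, y}"
| "fo_free (Mem x X) = {x}"
| "fo_free (RelAtom R xs) = set xs"
| "fo_free (SetAtom P Xs) = {}"
| "fo_free (Even X) = {}"
| "fo_free (Neg \<phi>) = fo_free \<phi>"
| "fo_free (Conj \<phi> \<psi>) = fo_free \<phi> \<union> fo_free \<psi>"
| "fo_free (ExFO x \<phi>) = fo_free \<phi> - {x}"
| "fo_free (ExSO X \<phi>) = fo_free \<phi>"

fun so_free :: "form \<Rightarrow> nat set" where
  "so_free (Eq x y) = {}"
| "so_free (Mem x X) = {X}"
| "so_free (RelAtom R xs) = {}"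
| "so_free (SetAtom P Xs) = set Xs"
| "so_free (Even X) = {X}"
| "so_free (Neg \<phi>) = so_free \<phi>"
| "so_free (Conj \<phi> \<psi>) = so_free \<phi> \<union> so_free \<psi>"
| "so_free (ExFO x \<phi>) = so_free \<phi>"
| "so_free (ExSO X \<phi>) = so_free \<phi> - {X}"

text \<open>Satisfaction; quantifiers range over elements / subsets of the universe.
  Atoms for symbols not interpreted in the structure are false (empty interpretation).\<close>
fun sat :: "'e struct \<Rightarrow> (nat \<Rightarrow> 'e) \<Rightarrow> (nat \<Rightarrow> 'e set) \<Rightarrow> form \<Rightarrow> bool" where
  "sat A v V (Eq x y) \<longleftrightarrow> v x = v y"
| "sat A v V (Mem x X) \<longleftrightarrow> v x \<in> V X"
| "sat A v V (RelAtom R xs) \<longleftrightarrow> map v xs \<in> rels A R"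
| "sat A v V (SetAtom P Xs) \<longleftrightarrow> map V Xs \<in> sets A P"
| "sat A v V (Even X) \<longleftrightarrow> even (card (V X))"
| "sat A v V (Neg \<phi>) \<longleftrightarrow> \<not> sat A v V \<phi>"
| "sat A v V (Conj \<phi> \<psi>) \<longleftrightarrow> sat A v V \<phi> \<and> sat A v V \<psi>"
| "sat A v V (ExFO x \<phi>) \<longleftrightarrow> (\<exists>a\<in>univ A. sat A (v(x := a)) V \<phi>)"
| "sat A v V (ExSO X \<phi>) \<longleftrightarrow> (\<exists>Y. Y \<subseteq> univ A \<and> sat A v (V(X := Y)) \<phi>)"

datatype atomic =
    Filter form
  | Restrict form
  | Interp "(symbol \<times> form) list"
  | Copy "string list"
  | Colour string

fun wf_atomic :: "atomic \<Rightarrow> bool" where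
  "wf_atomic (Filter \<phi>) \<longleftrightarrow> fo_free \<phi> = {} \<and> so_free \<phi> = {}"
| "wf_atomic (Restrict \<phi>) \<longleftrightarrow> fo_free \<phi> \<subseteq> {0} \<and> so_free \<phi> = {}"
| "wf_atomic (Interp qs) \<longleftrightarrow> distinct (map fst qs) \<and>
     (\<forall>(Q, \<phi>)\<in>set qs. if is_rel Q then fo_free \<phi> \<subseteq> {..<arity Q} \<and> so_free \<phi> = {}
                        else fo_free \<phi> = {} \<and> so_free \<phi> \<subseteq> {..<arity Q})"
| "wf_atomic (Copy ns) \<longleftrightarrow> distinct ns"
| "wf_atomic (Colour c) \<longleftrightarrow> True"

definition restrict_struct :: "'e set \<Rightarrow> 'e struct \<Rightarrow> 'e struct" where
  "restrict_struct W A = \<lparr> univ = univ A \<inter> W, voc = voc A,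
     rels = (\<lambda>Q. {xs \<in> rels A Q. set xs \<subseteq> W}),
     sets = (\<lambda>Q. {Xs \<in> sets A Q. \<forall>X\<in>set Xs. X \<subseteq> W}) \<rparr>"

definition interp_struct :: "'e struct \<Rightarrow> (symbol \<times> form) list \<Rightarrow> 'e struct" where
  "interp_struct A qs = \<lparr> univ = univ A, voc = fst ` set qs,
     rels = (\<lambda>Q. if is_rel Q \<and> Q \<in> fst ` set qs then
                   {xs. length xs = arity Q \<and> set xs \<subseteq> univ A \<and>
                        sat A (\<lambda>i. xs ! i) (\<lambda>_. {}) (the (map_of qs Q))}
                 else {}),
     sets = (\<lambda>Q. if \<not> is_rel Q \<and> Q \<in> fst ` set qs then
                   {Xs. length Xs = arity Q \<and> (\<forall>X\<in>set Xs. X \<subseteq> univ A) \<and>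
                        sat A (\<lambda>_. undefined) (\<lambda>i. Xs ! i) (the (map_of qs Q))}
                 else {}) \<rparr>"

text \<open>Copying: the fresh copies are arbitrary new elements (the result is determined up to
  the names of the fresh elements, and every naming is an output).\<close>
definition copy_outputs :: "string list \<Rightarrow> 'e struct \<Rightarrow> 'e struct set" where
  "copy_outputs ns A = {B. \<exists>f :: 'e \<times> nat \<Rightarrow> 'e.
      inj_on f (univ A \<times> {..<length ns}) \<and>
      f ` (univ A \<times> {..<length ns}) \<inter> univ A = {} \<and>
      B = \<lparr> univ = univ A \<union> f ` (univ A \<times> {..<length ns}),
            voc = voc A \<union> {RelSym (ns ! i) 2 | i. i < length ns},
            rels = (\<lambda>Q. if (\<exists>i<length ns. Q = RelSym (ns ! i) 2)
                        then {[a, f (a, i)] | a i. a \<in> univ A \<and> i < length ns \<and> Q = RelSym (ns ! i) 2}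
                        else rels A Q),
            sets = sets A \<rparr>}"

definition colour_outputs :: "string \<Rightarrow> 'e struct \<Rightarrow> 'e struct set" where
  "colour_outputs c A = {B. \<exists>X. X \<subseteq> univ A \<and>
      B = \<lparr> univ = univ A, voc = voc A \<union> {RelSym c 1},
            rels = (rels A)(RelSym c 1 := {[a] | a. a \<in> X}),
            sets = sets A \<rparr>}"

fun step :: "atomic \<Rightarrow> 'e struct \<Rightarrow> 'e struct set" where
  "step (Filter \<phi>) A = (if sat A (\<lambda>_. undefined) (\<lambda>_. {}) \<phi> then {A} else {})"
| "step (Restrict \<phi>) A =
     {restrict_struct {a \<in> univ A. sat A (\<lambda>_. a) (\<lambda>_. {}) \<phi>} A}"
| "step (Interp qs) A = {interp_struct A qs}"
| "step (Copy ns) A =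
     (if \<forall>n\<in>set ns. RelSym n 2 \<notin> voc A then copy_outputs ns A else {})"
| "step (Colour c) A = (if RelSym c 1 \<notin> voc A then colour_outputs c A else {})"

fun run :: "atomic list \<Rightarrow> 'e struct \<Rightarrow> 'e struct set" where
  "run [] A = {A}"
| "run (t # ts) A = (\<Union>B\<in>step t A. run ts B)"

definition wf_transduction :: "atomic list \<Rightarrow> bool" where
  "wf_transduction ts \<longleftrightarrow> (\<forall>t\<in>set ts. wf_atomic t)"

definition overlay_on :: "symbol set \<Rightarrow> atomic list \<Rightarrow> 'e itself \<Rightarrow> bool" where
  "overlay_on \<Sigma> ts _ \<longleftrightarrow> (\<forall>A :: 'e struct. is_structure \<Sigma> A \<longrightarrow> (\<forall>B\<in>run ts A. substruct A B))"

abbreviation SET :: symbol where "SET \<equiv> SetSym ''SET'' 1"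
abbreviation ancestor :: symbol where "ancestor \<equiv> RelSym ''ancestor'' 2"

definition set_system :: "'e set \<Rightarrow> 'e set set \<Rightarrow> bool" where
  "set_system U S \<longleftrightarrow> finite U \<and> (\<forall>X\<in>S. X \<subseteq> U) \<and> {} \<notin> S \<and> U \<in> S \<and> (\<forall>a\<in>U. {a} \<in> S)"

definition overlap :: "'e set \<Rightarrow> 'e set \<Rightarrow> bool" where
  "overlap X Y \<longleftrightarrow> X \<inter> Y \<noteq> {} \<and> \<not> X \<subseteq> Y \<and> \<not> Y \<subseteq> X"

definition laminar :: "'e set \<Rightarrow> 'e set set \<Rightarrow> bool" where
  "laminar U S \<longleftrightarrow> set_system U S \<and> (\<forall>X\<in>S. \<forall>Y\<in>S. \<not> overlap X Y)"

definition set_system_struct :: "'e set \<Rightarrow> 'e set set \<Rightarrow> 'e struct" where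
  "set_system_struct U S = \<lparr> univ = U, voc = {SET}, rels = (\<lambda>_. {}),
     sets = (\<lambda>Q. if Q = SET then {[X] | X. X \<in> S} else {}) \<rparr>"

definition lam_child :: "'e set set \<Rightarrow> 'e set \<Rightarrow> 'e set \<Rightarrow> bool" where
  "lam_child S X Y \<longleftrightarrow> X \<in> S \<and> Y \<in> S \<and> X \<subset> Y \<and> \<not> (\<exists>Z\<in>S. X \<subset> Z \<and> Z \<subset> Y)"

text \<open>Ancestor relation (reflexive) of the laminar tree: Y is an ancestor of X.\<close>
definition lam_ancestor :: "'e set set \<Rightarrow> 'e set \<Rightarrow> 'e set \<Rightarrow> bool" where
  "lam_ancestor S Y X \<longleftrightarrow> Y \<in> S \<and> X \<in> S \<and> (\<lambda>P C. lam_child S C P)\<^sup>*\<^sup>* Y X"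

definition represents_laminar_tree :: "'e struct \<Rightarrow> 'e set \<Rightarrow> 'e set set \<Rightarrow> bool" where
  "represents_laminar_tree Tr U S \<longleftrightarrow>
     voc Tr = {ancestor} \<and> U \<subseteq> univ Tr \<and> sets Tr = (\<lambda>_. {}) \<and>
     (\<exists>node. bij_betw node (univ Tr) S \<and> (\<forall>a\<in>U. node a = {a}) \<and>
        rels Tr = (\<lambda>Q. if Q = ancestor then
            {[u, v] | u v. u \<in> univ Tr \<and> v \<in> univ Tr \<and> lam_ancestor S (node u) (node v)}
          else {}))"

end

theory Submission
  imports Defs
begin

definition internal :: "'e set set \<Rightarrow> 'e set \<Rightarrow> bool" where
  "internal S X \<longleftrightarrow> X \<in> S \<and> (\<forall>a. X \<noteq> {a})"

lemma lam_finite: "laminar U S \<Longrightarrow> finite S"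
proof -
  assume "laminar U S"
  then have "S \<subseteq> Pow U" "finite U" unfolding laminar_def set_system_def by auto
  then show ?thesis using finite_subset by blast
qed

lemma lam_sub: "laminar U S \<Longrightarrow> X \<in> S \<Longrightarrow> X \<subseteq> U"
  unfolding laminar_def set_system_def by auto

lemma lam_ne: "laminar U S \<Longrightarrow> X \<in> S \<Longrightarrow> X \<noteq> {}"
  unfolding laminar_def set_system_def by auto

lemma lam_fin: "laminar U S \<Longrightarrow> X \<in> S \<Longrightarrow> finite X"
  unfolding laminar_def set_system_def by (auto intro: finite_subset)

lemma lam_single: "laminar U S \<Longrightarrow> a \<in> U \<Longrightarrow> {a} \<in> S"
  unfolding laminar_def set_system_def by auto

lemma lam_nest: "laminar U S \<Longrightarrow> X \<in> S \<Longrightarrow> Y \<in> S \<Longrightarrow> X \<inter> Y \<noteq> {} \<Longrightarrow> X \<subseteq> Y \<or> Y \<subseteq> X"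
  unfolding laminar_def overlap_def by blast

lemma child_exists:
  assumes L: "laminar U S" and X: "X \<in> S" and Y: "Y \<in> S" and XY: "X \<subset> Y"
  shows "\<exists>C. lam_child S C Y \<and> X \<subseteq> C"
proof -
  let ?F = "{W \<in> S. X \<subseteq> W \<and> W \<subset> Y}"
  have fin: "finite ?F" using lam_finite[OF L] by auto
  have ne: "X \<in> ?F" using X XY by auto
  obtain W where W: "W \<in> ?F" and mx: "\<forall>b\<in>?F. W \<le> b \<longrightarrow> W = b"
    using finite_has_maximal[OF fin] ne by blast
  have "lam_child S W Y"
    unfolding lam_child_def
  proof (intro conjI notI)
    show "W \<in> S" "Y \<in> S" "W \<subset> Y" using W Y by auto
    assume "\<exists>Z\<in>S. W \<subset> Z \<and> Z \<subset> Y"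
    then obtain Z where Z: "Z \<in> S" "W \<subset> Z" "Z \<subset> Y" by blast
    then have "Z \<in> ?F" using W by auto
    then have "W = Z" using mx Z(2) by auto
    then show False using Z(2) by simp
  qed
  then show ?thesis using W by auto
qed

lemma child_sub: "lam_child S C Y \<Longrightarrow> C \<subset> Y" "lam_child S C Y \<Longrightarrow> C \<in> S" "lam_child S C Y \<Longrightarrow> Y \<in> S"
  unfolding lam_child_def by auto

lemma child_disj:
  assumes L: "laminar U S" and "lam_child S C1 Y" "lam_child S C2 Y" "C1 \<noteq> C2"
  shows "C1 \<inter> C2 = {}"
proof (rule ccontr)
  assume "C1 \<inter> C2 \<noteq> {}"
  then have "C1 \<subseteq> C2 \<or> C2 \<subseteq> C1" using lam_nest[OF L child_sub(2)[OF assms(2)] child_sub(2)[OF assms(3)]] by blast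
  moreover have "\<not> C1 \<subset> C2" using assms(2) child_sub[OF assms(3)] unfolding lam_child_def by blast
  moreover have "\<not> C2 \<subset> C1" using assms(3) child_sub[OF assms(2)] unfolding lam_child_def by blast
  ultimately show False using assms(4) by blast
qed

lemma child_in_between:
  assumes L: "laminar U S" and C: "lam_child S C Y" and Z: "Z \<in> S" "Z \<subseteq> Y" "Z \<inter> C \<noteq> {}"
  shows "Z = Y \<or> Z \<subseteq> C"
proof -
  have "Z \<subseteq> C \<or> C \<subseteq> Z" using lam_nest[OF L Z(1) child_sub(2)[OF C]] Z(3) by blast
  moreover have "\<not> (C \<subset> Z \<and> Z \<subset> Y)" using C Z(1) unfolding lam_child_def by blast
  ultimately show ?thesis using Z(2) by blast
qed

lemma anc_sub: "(\<lambda>P C. lam_child S C P)\<^sup>*\<^sup>* Y X \<Longrightarrow> X \<subseteq> Y"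
  by (induction rule: rtranclp_induct) (auto simp: lam_child_def)

lemma anc_of_sub:
  assumes L: "laminar U S"
  shows "Y \<in> S \<Longrightarrow> X \<in> S \<Longrightarrow> X \<subseteq> Y \<Longrightarrow> (\<lambda>P C. lam_child S C P)\<^sup>*\<^sup>* Y X"
proof (induction "card Y" arbitrary: Y rule: less_induct)
  case less
  show ?case
  proof (cases "X = Y")
    case True then show ?thesis by simp
  next
    case False
    then obtain C where C: "lam_child S C Y" "X \<subseteq> C"
      using child_exists[OF L less(3) less(2)] less(4) by blast
    have "card C < card Y" using C(1) lam_fin[OF L less(2)] psubset_card_mono
      unfolding lam_child_def by blast
    then have "(\<lambda>P C. lam_child S C P)\<^sup>*\<^sup>* C X" using less C child_sub(2)[OF C(1)] by blast
    then show ?thesis using C(1) by (meson converse_rtranclp_into_rtranclp)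
  qed
qed

lemma lam_ancestor_iff:
  assumes L: "laminar U S"
  shows "lam_ancestor S Y X \<longleftrightarrow> Y \<in> S \<and> X \<in> S \<and> X \<subseteq> Y"
  unfolding lam_ancestor_def using anc_sub anc_of_sub[OF L] by blast

lemma internal_two_children:
  assumes L: "laminar U S" and I: "internal S Y"
  shows "\<exists>C1 C2. lam_child S C1 Y \<and> lam_child S C2 Y \<and> C1 \<noteq> C2"
proof -
  have Y: "Y \<in> S" "Y \<noteq> {}" using I lam_ne[OF L] unfolding internal_def by auto
  then obtain a where a: "a \<in> Y" by auto
  have aS: "{a} \<in> S" using lam_single[OF L] lam_sub[OF L Y(1)] a by auto
  have "{a} \<subset> Y" using a I unfolding internal_def by auto
  then obtain C1 where C1: "lam_child S C1 Y" "{a} \<subseteq> C1" using child_exists[OF L aS Y(1)] by blast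
  then obtain b where b: "b \<in> Y" "b \<notin> C1" unfolding lam_child_def by auto
  have bS: "{b} \<in> S" using lam_single[OF L] lam_sub[OF L Y(1)] b by auto
  have "{b} \<subset> Y" using b I unfolding internal_def by auto
  then obtain C2 where C2: "lam_child S C2 Y" "{b} \<subseteq> C2" using child_exists[OF L bS Y(1)] by blast
  then show ?thesis using C1 b by blast
qed

lemma children_union:
  assumes L: "laminar U S" and I: "internal S Y"
  shows "\<Union>{C. lam_child S C Y} = Y"
proof
  show "\<Union>{C. lam_child S C Y} \<subseteq> Y" unfolding lam_child_def by auto
  show "Y \<subseteq> \<Union>{C. lam_child S C Y}"
  proof
    fix a assume a: "a \<in> Y"
    have Y: "Y \<in> S" using I unfolding internal_def by auto
    have aS: "{a} \<in> S" using lam_single[OF L] lam_sub[OF L Y] a by auto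
    have "{a} \<subset> Y" using a I unfolding internal_def by auto
    then obtain C1 where C1: "lam_child S C1 Y" "{a} \<subseteq> C1" using child_exists[OF L aS Y] by blast
    then show "a \<in> \<Union>{C. lam_child S C Y}" by auto
  qed
qed

definition NrelS :: "'e set set \<Rightarrow> ('e set \<Rightarrow> nat \<times> nat) \<Rightarrow> nat \<times> nat \<Rightarrow> 'e \<Rightarrow> 'e set \<Rightarrow> bool" where
  "NrelS S T t a X \<longleftrightarrow> X \<in> S \<and> a \<in> X \<and> X \<noteq> {a} \<and> T X = t \<and>
     (\<forall>Z\<in>S. a \<in> Z \<longrightarrow> Z \<subset> X \<longrightarrow> Z \<noteq> {a} \<longrightarrow> T Z \<noteq> t)"

lemma NrelS_fun:
  assumes L: "laminar U S" and "NrelS S T t a X" "NrelS S T t a X'"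
  shows "X = X'"
proof -
  have A: "X \<in> S" "a \<in> X" "X \<noteq> {a}" "T X = t" "\<forall>Z\<in>S. a \<in> Z \<longrightarrow> Z \<subset> X \<longrightarrow> Z \<noteq> {a} \<longrightarrow> T Z \<noteq> t"
    using assms(2) unfolding NrelS_def by auto
  have B: "X' \<in> S" "a \<in> X'" "X' \<noteq> {a}" "T X' = t" "\<forall>Z\<in>S. a \<in> Z \<longrightarrow> Z \<subset> X' \<longrightarrow> Z \<noteq> {a} \<longrightarrow> T Z \<noteq> t"
    using assms(3) unfolding NrelS_def by auto
  have "X \<inter> X' \<noteq> {}" using A B by auto
  then have "X \<subseteq> X' \<or> X' \<subseteq> X" using lam_nest[OF L A(1) B(1)] by blast
  moreover have "\<not> X \<subset> X'" using A B by metis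
  moreover have "\<not> X' \<subset> X" using A B by metis
  ultimately show ?thesis by blast
qed

lemma path_lemma:
  assumes L: "laminar U S"
    and CC: "\<forall>Z. internal S Z \<longrightarrow> (\<forall>t'. \<exists>C. lam_child S C Z \<and> T C \<noteq> t')"
  shows "Y \<in> S \<Longrightarrow> (\<not> internal S Y \<or> T Y \<noteq> t) \<Longrightarrow>
     \<exists>a\<in>Y. \<forall>Z\<in>S. a \<in> Z \<longrightarrow> Z \<subseteq> Y \<longrightarrow> Z \<noteq> {a} \<longrightarrow> T Z \<noteq> t"
proof (induction "card Y" arbitrary: Y rule: less_induct)
  case less
  show ?case
  proof (cases "internal S Y")
    case False
    then obtain b where b: "Y = {b}" using less(2) unfolding internal_def by auto
    show ?thesis using b by (intro bexI[of _ b]) (auto dest: subset_singletonD)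
  next
    case True
    then have TY: "T Y \<noteq> t" using less(3) by auto
    obtain C where C: "lam_child S C Y" "T C \<noteq> t" using CC True by blast
    have "card C < card Y" using C(1) lam_fin[OF L less(2)] psubset_card_mono
      unfolding lam_child_def by blast
    then obtain a where a: "a \<in> C" "\<forall>Z\<in>S. a \<in> Z \<longrightarrow> Z \<subseteq> C \<longrightarrow> Z \<noteq> {a} \<longrightarrow> T Z \<noteq> t"
      using less(1)[of C] C child_sub(2)[OF C(1)] by blast
    show ?thesis
    proof (intro bexI ballI impI)
      fix Z assume Z: "Z \<in> S" "a \<in> Z" "Z \<subseteq> Y" "Z \<noteq> {a}"
      then have "Z = Y \<or> Z \<subseteq> C" using child_in_between[OF L C(1), of Z] a by auto
      then show "T Z \<noteq> t" using TY a Z by auto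
    next
      show "a \<in> Y" using a C(1) unfolding lam_child_def by auto
    qed
  qed
qed

lemma rep_exists:
  assumes L: "laminar U S"
    and CC: "\<forall>Z. internal S Z \<longrightarrow> (\<forall>t'. \<exists>C. lam_child S C Z \<and> T C \<noteq> t')"
    and X: "internal S X"
  shows "\<exists>a. NrelS S T (T X) a X"
proof -
  obtain C where C: "lam_child S C X" "T C \<noteq> T X" using CC X by blast
  obtain a where a: "a \<in> C" "\<forall>Z\<in>S. a \<in> Z \<longrightarrow> Z \<subseteq> C \<longrightarrow> Z \<noteq> {a} \<longrightarrow> T Z \<noteq> T X"
    using path_lemma[OF L CC child_sub(2)[OF C(1)], of "T X"] C by blast
  have "NrelS S T (T X) a X"
    unfolding NrelS_def
  proof (intro conjI ballI impI)
    show "X \<in> S" "T X = T X" using X unfolding internal_def by auto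
    show "a \<in> X" using a C unfolding lam_child_def by auto
    show "X \<noteq> {a}" using X unfolding internal_def by auto
    fix Z assume Z: "Z \<in> S" "a \<in> Z" "Z \<subset> X" "Z \<noteq> {a}"
    then have "Z = X \<or> Z \<subseteq> C" using child_in_between[OF L C(1), of Z] a by auto
    then show "T Z \<noteq> T X" using a Z by auto
  qed
  then show ?thesis by blast
qed

definition ntyp :: "'e set \<Rightarrow> 'e set \<Rightarrow> 'e set \<Rightarrow> nat \<times> nat" where
  "ntyp M1 M2 Z = (card (Z \<inter> M1) mod 2, card (Z \<inter> M2) mod 2)"

definition NZ :: "(nat \<times> nat) set" where
  "NZ = {(1,0), (0,1), (1,1)}"

lemma parity_arith:
  assumes "a < 2" "b < (2::nat)" "m \<ge> 1"
  shows "((if odd m then a else (a + b) mod 2) + (m - 1) * b) mod 2 = a"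
proof -
  have "b = 0 \<or> b = 1" using assms by auto
  then show ?thesis
  proof
    assume "b = 0" then show ?thesis using assms by auto
  next
    assume b: "b = 1"
    show ?thesis
    proof (cases "odd m")
      case True
      then obtain k where "m = 2 * k + 1" by (metis oddE)
      then show ?thesis using assms b by simp
    next
      case False
      then obtain k where k: "m = 2 * k" by auto
      then have "k \<ge> 1" using assms by auto
      then have "m - 1 = 2 * (k - 1) + 1" using k by auto
      then show ?thesis using assms b False by (simp add: mod_add_eq[symmetric]) presburger
    qed
  qed
qed

lemma sum_parity:
  assumes "finite Ch" "c0 \<in> Ch" "\<forall>C\<in>Ch. f C mod 2 = (if C = c0 then a else b)"
  shows "(sum f Ch) mod 2 = (a + (card Ch - 1) * b) mod (2::nat)"
proof -
  have "(sum f Ch) mod 2 = (\<Sum>C\<in>Ch. f C mod 2) mod 2" by (simp add: mod_sum_eq)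
  also have "(\<Sum>C\<in>Ch. f C mod 2) = (\<Sum>C\<in>Ch. (if C = c0 then a else b))"
    using assms(3) by (intro sum.cong) auto
  also have "\<dots> = a + (\<Sum>C\<in>Ch - {c0}. (if C = c0 then a else b))"
    using sum.remove[OF assms(1,2), of "\<lambda>C. if C = c0 then a else b"] by simp
  also have "(\<Sum>C\<in>Ch - {c0}. (if C = c0 then a else b)) = (\<Sum>C\<in>Ch - {c0}. b)"
    by (intro sum.cong) auto
  also have "\<dots> = (card Ch - 1) * b" using assms(1,2) by simp
  finally show ?thesis .
qed

definition goodcol :: "'e set set \<Rightarrow> 'e set \<Rightarrow> 'e set \<Rightarrow> 'e set \<Rightarrow> bool" where
  "goodcol S M1 M2 Y \<longleftrightarrow> (\<forall>Z. internal S Z \<longrightarrow> Z \<subseteq> Y \<longrightarrow> ntyp M1 M2 Z \<noteq> (0,0) \<and>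
      (\<forall>t'. \<exists>C. lam_child S C Z \<and> ntyp M1 M2 C \<noteq> t'))"

lemma colouring:
  assumes L: "laminar U S"
  shows "Y \<in> S \<Longrightarrow> t \<in> NZ \<Longrightarrow> \<exists>M1 M2. M1 \<subseteq> Y \<and> M2 \<subseteq> Y \<and> ntyp M1 M2 Y = t \<and> goodcol S M1 M2 Y"
proof (induction "card Y" arbitrary: Y t rule: less_induct)
  case less
  show ?case
  proof (cases "internal S Y")
    case False
    then obtain a where a: "Y = {a}" using less(2) unfolding internal_def by auto
    define M1 where "M1 = (if fst t = 1 then {a} else {})"
    define M2 where "M2 = (if snd t = 1 then {a} else {})"
    have "ntyp M1 M2 Y = t" using less(3) a unfolding ntyp_def M1_def M2_def NZ_def by auto
    moreover have "goodcol S M1 M2 Y" unfolding goodcol_def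
    proof (intro allI impI)
      fix Z assume Z: "internal S Z" "Z \<subseteq> Y"
      have "Z \<noteq> {}" using lam_ne[OF L] Z(1) unfolding internal_def by auto
      then have "Z = {a}" using Z(2) a by auto
      then have False using Z(1) unfolding internal_def by auto
      then show "ntyp M1 M2 Z \<noteq> (0,0) \<and> (\<forall>t'. \<exists>C. lam_child S C Z \<and> ntyp M1 M2 C \<noteq> t')"
        by blast
    qed
    moreover have "M1 \<subseteq> Y" "M2 \<subseteq> Y" using a unfolding M1_def M2_def by auto
    ultimately show ?thesis by blast
  next
    case True
    define Ch where "Ch = {C. lam_child S C Y}"
    have finCh: "finite Ch" unfolding Ch_def using lam_finite[OF L]
      by (rule finite_subset[rotated]) (auto simp: lam_child_def)
    obtain c0 c1 where c01: "c0 \<in> Ch" "c1 \<in> Ch" "c0 \<noteq> c1"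
      using internal_two_children[OF L True] unfolding Ch_def by blast
    have m1: "card Ch \<ge> 1" using finCh c01 by (metis One_nat_def Suc_leI card_gt_0_iff empty_iff)
    define u where "u = (if t = (1,1) then (1::nat,0::nat) else (1,1))"
    define v where "v = (if odd (card Ch) then t else ((fst t + fst u) mod 2, (snd t + snd u) mod 2))"
    define tgt where "tgt C = (if C = c0 then v else u)" for C
    have uNZ: "u \<in> NZ" unfolding u_def NZ_def by auto
    have vNZ: "v \<in> NZ" using less(3) unfolding v_def u_def NZ_def by auto
    have uv: "u \<noteq> v" using less(3) unfolding v_def u_def NZ_def by auto
    have tgtNZ: "tgt C \<in> NZ" for C using uNZ vNZ unfolding tgt_def by auto
    have "\<forall>C\<in>Ch. \<exists>p. fst p \<subseteq> C \<and> snd p \<subseteq> C \<and> ntyp (fst p) (snd p) C = tgt C \<and> goodcol S (fst p) (snd p) C"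
    proof
      fix C assume C: "C \<in> Ch"
      then have "card C < card Y" using lam_fin[OF L less(2)] psubset_card_mono
        unfolding Ch_def lam_child_def by blast
      then show "\<exists>p. fst p \<subseteq> C \<and> snd p \<subseteq> C \<and> ntyp (fst p) (snd p) C = tgt C \<and> goodcol S (fst p) (snd p) C"
        using less(1)[of C "tgt C"] C tgtNZ unfolding Ch_def lam_child_def by auto
    qed
    then obtain g where g: "\<forall>C\<in>Ch. fst (g C) \<subseteq> C \<and> snd (g C) \<subseteq> C \<and> ntyp (fst (g C)) (snd (g C)) C = tgt C \<and> goodcol S (fst (g C)) (snd (g C)) C"
      by metis
    have gs1: "fst (g C) \<subseteq> C" if "C \<in> Ch" for C using g that by blast
    have gs2: "snd (g C) \<subseteq> C" if "C \<in> Ch" for C using g that by blast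
    have gt: "ntyp (fst (g C)) (snd (g C)) C = tgt C" if "C \<in> Ch" for C using g that by blast
    have gg: "goodcol S (fst (g C)) (snd (g C)) C" if "C \<in> Ch" for C using g that by blast
    define M1 where "M1 = (\<Union>C\<in>Ch. fst (g C))"
    define M2 where "M2 = (\<Union>C\<in>Ch. snd (g C))"
    have disj: "C \<in> Ch \<Longrightarrow> C' \<in> Ch \<Longrightarrow> C \<noteq> C' \<Longrightarrow> C \<inter> C' = {}" for C C'
      using child_disj[OF L] unfolding Ch_def by blast
    have loc: "Z \<inter> M1 = Z \<inter> fst (g C) \<and> Z \<inter> M2 = Z \<inter> snd (g C)" if "C \<in> Ch" "Z \<subseteq> C" for C Z
    proof -
      have e: "Z \<inter> fst (g C') = {} \<and> Z \<inter> snd (g C') = {}" if "C' \<in> Ch" "C' \<noteq> C" for C'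
      proof -
        have "C \<inter> C' = {}" using disj[of C C'] that \<open>C \<in> Ch\<close> by auto
        then show ?thesis using gs1[OF that(1)] gs2[OF that(1)] \<open>Z \<subseteq> C\<close> by auto
      qed
      show ?thesis
      proof (intro conjI equalityI subsetI)
        fix x assume x: "x \<in> Z \<inter> M1"
        then obtain C' where "C' \<in> Ch" "x \<in> fst (g C')" unfolding M1_def by auto
        then show "x \<in> Z \<inter> fst (g C)" using e[of C'] x by (cases "C' = C") auto
      next
        fix x assume x: "x \<in> Z \<inter> M2"
        then obtain C' where "C' \<in> Ch" "x \<in> snd (g C')" unfolding M2_def by auto
        then show "x \<in> Z \<inter> snd (g C)" using e[of C'] x by (cases "C' = C") auto
      qed (use that in \<open>auto simp: M1_def M2_def\<close>)
    qed
    have loct: "ntyp M1 M2 Z = ntyp (fst (g C)) (snd (g C)) Z" if "C \<in> Ch" "Z \<subseteq> C" for C Z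
      using loc[OF that] unfolding ntyp_def by simp
    have typC: "ntyp M1 M2 C = tgt C" if "C \<in> Ch" for C
      using loct[OF that order_refl] gt[OF that] by simp
    have subY: "C \<subseteq> Y" if "C \<in> Ch" for C using that unfolding Ch_def lam_child_def by auto
    have M1Y: "M1 \<subseteq> Y" "M2 \<subseteq> Y" unfolding M1_def M2_def using gs1 gs2 subY by blast+
    have finC: "finite C" if "C \<in> Ch" for C using lam_fin[OF L less(2)] subY[OF that] finite_subset by blast
    have f1: "\<forall>C\<in>Ch. finite (fst (g C))" using finC gs1 finite_subset by blast
    have f2: "\<forall>C\<in>Ch. finite (snd (g C))" using finC gs2 finite_subset by blast
    have d1: "\<forall>C\<in>Ch. \<forall>C'\<in>Ch. C \<noteq> C' \<longrightarrow> fst (g C) \<inter> fst (g C') = {}"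
    proof (intro ballI impI)
      fix C C' assume "C \<in> Ch" "C' \<in> Ch" "C \<noteq> C'"
      then show "fst (g C) \<inter> fst (g C') = {}" using disj[of C C'] gs1[of C] gs1[of C'] by auto
    qed
    have d2: "\<forall>C\<in>Ch. \<forall>C'\<in>Ch. C \<noteq> C' \<longrightarrow> snd (g C) \<inter> snd (g C') = {}"
    proof (intro ballI impI)
      fix C C' assume "C \<in> Ch" "C' \<in> Ch" "C \<noteq> C'"
      then show "snd (g C) \<inter> snd (g C') = {}" using disj[of C C'] gs2[of C] gs2[of C'] by auto
    qed
    have cardM1: "card M1 = (\<Sum>C\<in>Ch. card (fst (g C)))" unfolding M1_def
      by (rule card_UN_disjoint[OF finCh f1 d1])
    have cardM2: "card M2 = (\<Sum>C\<in>Ch. card (snd (g C)))" unfolding M2_def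
      by (rule card_UN_disjoint[OF finCh f2 d2])
    have p1: "\<forall>C\<in>Ch. card (fst (g C)) mod 2 = (if C = c0 then fst v else fst u)"
    proof
      fix C assume C: "C \<in> Ch"
      have "C \<inter> fst (g C) = fst (g C)" using gs1[OF C] by blast
      moreover have "card (C \<inter> fst (g C)) mod 2 = fst (tgt C)" using gt[OF C] unfolding ntyp_def
        by (metis fst_conv)
      ultimately show "card (fst (g C)) mod 2 = (if C = c0 then fst v else fst u)"
        unfolding tgt_def by simp
    qed
    have p2: "\<forall>C\<in>Ch. card (snd (g C)) mod 2 = (if C = c0 then snd v else snd u)"
    proof
      fix C assume C: "C \<in> Ch"
      have "C \<inter> snd (g C) = snd (g C)" using gs2[OF C] by blast
      moreover have "card (C \<inter> snd (g C)) mod 2 = snd (tgt C)" using gt[OF C] unfolding ntyp_def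
        by (metis snd_conv)
      ultimately show "card (snd (g C)) mod 2 = (if C = c0 then snd v else snd u)"
        unfolding tgt_def by simp
    qed
    have tb: "fst t < 2" "snd t < 2" "fst u < 2" "snd u < 2" using less(3) uNZ unfolding NZ_def by auto
    have "card M1 mod 2 = fst t"
      unfolding cardM1 sum_parity[OF finCh c01(1) p1] unfolding v_def
      using parity_arith[OF tb(1) tb(3) m1] by (cases "odd (card Ch)") auto
    moreover have "card M2 mod 2 = snd t"
      unfolding cardM2 sum_parity[OF finCh c01(1) p2] unfolding v_def
      using parity_arith[OF tb(2) tb(4) m1] by (cases "odd (card Ch)") auto
    moreover have "Y \<inter> M1 = M1" "Y \<inter> M2 = M2" using M1Y by auto
    ultimately have typY: "ntyp M1 M2 Y = t" unfolding ntyp_def by (simp add: prod_eq_iff)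
    have "goodcol S M1 M2 Y" unfolding goodcol_def
    proof (intro allI impI)
      fix Z assume Z: "internal S Z" "Z \<subseteq> Y"
      show "ntyp M1 M2 Z \<noteq> (0,0) \<and> (\<forall>t'. \<exists>C. lam_child S C Z \<and> ntyp M1 M2 C \<noteq> t')"
      proof (cases "Z = Y")
        case True
        have "ntyp M1 M2 Z \<noteq> (0,0)" using typY True less(3) unfolding NZ_def by auto
        moreover have "\<exists>C. lam_child S C Z \<and> ntyp M1 M2 C \<noteq> t'" for t'
        proof (cases "t' = v")
          case True
          have "ntyp M1 M2 c1 = u" using typC[OF c01(2)] c01 unfolding tgt_def by auto
          then show ?thesis using c01(2) True uv \<open>Z = Y\<close> unfolding Ch_def by auto
        next
          case False
          have "ntyp M1 M2 c0 = v" using typC[OF c01(1)] unfolding tgt_def by auto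
          then show ?thesis using c01(1) False \<open>Z = Y\<close> unfolding Ch_def by auto
        qed
        ultimately show ?thesis by blast
      next
        case False
        have ZS: "Z \<in> S" using Z unfolding internal_def by auto
        obtain C where C: "lam_child S C Y" "Z \<subseteq> C"
          using child_exists[OF L ZS less(2)] Z False by blast
        have CC: "C \<in> Ch" using C unfolding Ch_def by auto
        have gc: "goodcol S (fst (g C)) (snd (g C)) C" using gg[OF CC] .
        have "ntyp M1 M2 Z \<noteq> (0,0)" using gc Z C loct[OF CC C(2)] unfolding goodcol_def by auto
        moreover have "\<exists>C'. lam_child S C' Z \<and> ntyp M1 M2 C' \<noteq> t'" for t'
        proof -
          obtain C' where C': "lam_child S C' Z" "ntyp (fst (g C)) (snd (g C)) C' \<noteq> t'"
            using gc Z C unfolding goodcol_def by blast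
          have "C' \<subseteq> C" using C' C(2) unfolding lam_child_def by auto
          then show ?thesis using C' loct[OF CC] by metis
        qed
        ultimately show ?thesis by blast
      qed
    qed
    then show ?thesis using typY M1Y by blast
  qed
qed

definition fOr :: "form \<Rightarrow> form \<Rightarrow> form" where "fOr a b = Neg (Conj (Neg a) (Neg b))"
definition fImp :: "form \<Rightarrow> form \<Rightarrow> form" where "fImp a b = Neg (Conj a (Neg b))"
definition fIff :: "form \<Rightarrow> form \<Rightarrow> form" where "fIff a b = Conj (fImp a b) (fImp b a)"
definition fAll :: "nat \<Rightarrow> form \<Rightarrow> form" where "fAll x a = Neg (ExFO x (Neg a))"
definition fAllS :: "nat \<Rightarrow> form \<Rightarrow> form" where "fAllS x a = Neg (ExSO x (Neg a))"

lemma sat_fOr[simp]: "sat E v V (fOr a b) \<longleftrightarrow> sat E v V a \<or> sat E v V b" by (simp add: fOr_def)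
lemma sat_fImp[simp]: "sat E v V (fImp a b) \<longleftrightarrow> (sat E v V a \<longrightarrow> sat E v V b)" by (simp add: fImp_def)
lemma sat_fIff[simp]: "sat E v V (fIff a b) \<longleftrightarrow> (sat E v V a \<longleftrightarrow> sat E v V b)" by (auto simp add: fIff_def)
lemma sat_fAll[simp]: "sat E v V (fAll x a) \<longleftrightarrow> (\<forall>b\<in>univ E. sat E (v(x:=b)) V a)" by (simp add: fAll_def)
lemma sat_fAllS[simp]: "sat E v V (fAllS x a) \<longleftrightarrow> (\<forall>Y. Y \<subseteq> univ E \<longrightarrow> sat E v (V(x:=Y)) a)" by (simp add: fAllS_def)

lemma free_fOr[simp]: "fo_free (fOr a b) = fo_free a \<union> fo_free b" "so_free (fOr a b) = so_free a \<union> so_free b"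
  by (simp_all add: fOr_def)
lemma free_fImp[simp]: "fo_free (fImp a b) = fo_free a \<union> fo_free b" "so_free (fImp a b) = so_free a \<union> so_free b"
  by (simp_all add: fImp_def)
lemma free_fIff[simp]: "fo_free (fIff a b) = fo_free a \<union> fo_free b" "so_free (fIff a b) = so_free a \<union> so_free b"
  by (auto simp add: fIff_def)
lemma free_fAll[simp]: "fo_free (fAll x a) = fo_free a - {x}" "so_free (fAll x a) = so_free a"
  by (simp_all add: fAll_def)
lemma free_fAllS[simp]: "fo_free (fAllS x a) = fo_free a" "so_free (fAllS x a) = so_free a - {x}"
  by (simp_all add: fAllS_def)

definition fSub :: "nat \<Rightarrow> nat \<Rightarrow> form" where "fSub X Y = fAll 9 (fImp (Mem 9 X) (Mem 9 Y))"
definition fNS :: "nat \<Rightarrow> nat \<Rightarrow> form" where "fNS x X = ExFO 9 (Conj (Mem 9 X) (Neg (Eq 9 x)))"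
definition fSingle :: "nat \<Rightarrow> nat \<Rightarrow> form" where "fSingle x X = fAll 9 (fIff (Mem 9 X) (Eq 9 x))"
definition fInS :: "nat \<Rightarrow> form" where "fInS X = SetAtom SET [X]"
definition fCol :: "(nat \<Rightarrow> string) \<Rightarrow> nat \<Rightarrow> nat \<Rightarrow> form" where
  "fCol col j x = RelAtom (RelSym (col j) 1) [x]"
definition fCp :: "(nat \<Rightarrow> string) \<Rightarrow> nat \<Rightarrow> nat \<Rightarrow> nat \<Rightarrow> form" where
  "fCp cp i y x = RelAtom (RelSym (cp i) 2) [y, x]"
definition fOdd :: "(nat \<Rightarrow> string) \<Rightarrow> nat \<Rightarrow> nat \<Rightarrow> form" where
  "fOdd col j Z = ExSO 8 (Conj (fAll 9 (fIff (Mem 9 8) (Conj (Mem 9 Z) (fCol col j 9)))) (Neg (Even 8)))"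
definition fBit :: "(nat \<Rightarrow> string) \<Rightarrow> nat \<Rightarrow> nat \<Rightarrow> nat \<Rightarrow> form" where
  "fBit col j b Z = (if b = 1 then fOdd col j Z else Neg (fOdd col j Z))"
definition fTyp :: "(nat \<Rightarrow> string) \<Rightarrow> nat \<times> nat \<Rightarrow> nat \<Rightarrow> form" where
  "fTyp col t Z = Conj (fBit col 0 (fst t) Z) (fBit col 1 (snd t) Z)"
definition fNrel :: "(nat \<Rightarrow> string) \<Rightarrow> nat \<times> nat \<Rightarrow> nat \<Rightarrow> nat \<Rightarrow> form" where
  "fNrel col t x X = Conj (fInS X) (Conj (Mem x X) (Conj (fNS x X) (Conj (fTyp col t X)
     (fAllS 7 (fImp (Conj (fInS 7) (Conj (Mem x 7) (Conj (fSub 7 X) (Conj (Neg (fSub X 7)) (fNS x 7)))))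
        (Neg (fTyp col t 7)))))))"

lemma free_basic[simp]:
  "fo_free (fSub X Y) = {}" "so_free (fSub X Y) = {X, Y}"
  "fo_free (fNS x X) = {x} - {9}" "so_free (fNS x X) = {X}"
  "fo_free (fSingle x X) = {x} - {9}" "so_free (fSingle x X) = {X}"
  "fo_free (fInS X) = {}" "so_free (fInS X) = {X}"
  "fo_free (fCol col j x) = {x}" "so_free (fCol col j x) = {}"
  "fo_free (fCp cp i y x) = {y, x}" "so_free (fCp cp i y x) = {}"
  "fo_free (fOdd col j Z) = {}" "so_free (fOdd col j Z) = {Z} - {8}"
  by (auto simp: fSub_def fNS_def fSingle_def fInS_def fCol_def fCp_def fOdd_def)

lemma free_fTyp[simp]: "fo_free (fTyp col t Z) = {}" "so_free (fTyp col t Z) = {Z} - {8}"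
  by (auto simp: fTyp_def fBit_def)

lemma free_fNrel: "fo_free (fNrel col t x X) \<subseteq> {x}" "so_free (fNrel col t x X) \<subseteq> {X}"
  by (auto simp: fNrel_def)

definition colok :: "'e struct \<Rightarrow> (nat \<Rightarrow> string) \<Rightarrow> nat \<Rightarrow> 'e set \<Rightarrow> bool" where
  "colok E col j M \<longleftrightarrow> (\<forall>a. [a] \<in> rels E (RelSym (col j) 1) \<longleftrightarrow> a \<in> M)"

definition setok :: "'e struct \<Rightarrow> 'e set set \<Rightarrow> bool" where
  "setok E S \<longleftrightarrow> (\<forall>X. [X] \<in> sets E SET \<longleftrightarrow> X \<in> S) \<and> (\<forall>X\<in>S. X \<subseteq> univ E)"

lemma sat_fSub[simp]: "sat E v V (fSub X Y) \<longleftrightarrow> (\<forall>b\<in>univ E. b \<in> V X \<longrightarrow> b \<in> V Y)"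
  by (simp add: fSub_def)
lemma sat_fNS[simp]: "x \<noteq> 9 \<Longrightarrow> sat E v V (fNS x X) \<longleftrightarrow> (\<exists>b\<in>univ E. b \<in> V X \<and> b \<noteq> v x)"
  by (simp add: fNS_def)
lemma sat_fSingle[simp]: "x \<noteq> 9 \<Longrightarrow> sat E v V (fSingle x X) \<longleftrightarrow> (\<forall>b\<in>univ E. b \<in> V X \<longleftrightarrow> b = v x)"
  by (simp add: fSingle_def)
lemma sat_fInS: "setok E S \<Longrightarrow> sat E v V (fInS X) \<longleftrightarrow> V X \<in> S"
  by (simp add: fInS_def setok_def)
lemma sat_fCol: "colok E col j M \<Longrightarrow> sat E v V (fCol col j x) \<longleftrightarrow> v x \<in> M"
  by (simp add: fCol_def colok_def)
lemma sat_fCp[simp]: "sat E v V (fCp cp i y x) \<longleftrightarrow> [v y, v x] \<in> rels E (RelSym (cp i) 2)"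
  by (simp add: fCp_def)

lemma sat_fOdd:
  assumes "Z \<noteq> 8" "colok E col j M" "V Z \<subseteq> univ E"
  shows "sat E v V (fOdd col j Z) \<longleftrightarrow> odd (card (V Z \<inter> M))"
proof -
  have "sat E v V (fOdd col j Z) \<longleftrightarrow>
     (\<exists>W. W \<subseteq> univ E \<and> (\<forall>b\<in>univ E. b \<in> W \<longleftrightarrow> b \<in> V Z \<and> b \<in> M) \<and> odd (card W))"
    using assms(1) sat_fCol[OF assms(2)] by (simp add: fOdd_def)
  also have "\<dots> \<longleftrightarrow> odd (card (V Z \<inter> M))"
  proof
    assume "\<exists>W. W \<subseteq> univ E \<and> (\<forall>b\<in>univ E. b \<in> W \<longleftrightarrow> b \<in> V Z \<and> b \<in> M) \<and> odd (card W)"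
    then obtain W where W: "W \<subseteq> univ E" "\<forall>b\<in>univ E. b \<in> W \<longleftrightarrow> b \<in> V Z \<and> b \<in> M" "odd (card W)" by blast
    have "W = V Z \<inter> M" using W(1,2) assms(3) by blast
    then show "odd (card (V Z \<inter> M))" using W(3) by simp
  next
    assume "odd (card (V Z \<inter> M))"
    then show "\<exists>W. W \<subseteq> univ E \<and> (\<forall>b\<in>univ E. b \<in> W \<longleftrightarrow> b \<in> V Z \<and> b \<in> M) \<and> odd (card W)"
      using assms(3) by (intro exI[of _ "V Z \<inter> M"]) auto
  qed
  finally show ?thesis .
qed

lemma sat_fTyp:
  assumes "Z \<noteq> 8" "colok E col 0 M1" "colok E col 1 M2" "V Z \<subseteq> univ E" "fst t < 2" "snd t < 2"
  shows "sat E v V (fTyp col t Z) \<longleftrightarrow> ntyp M1 M2 (V Z) = t"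
proof -
  have a: "sat E v V (fBit col 0 (fst t) Z) \<longleftrightarrow> card (V Z \<inter> M1) mod 2 = fst t"
    using sat_fOdd[of Z E col 0 M1 V v, OF assms(1,2,4)] assms(5) unfolding fBit_def
    by (cases "fst t = 1") (auto simp: odd_iff_mod_2_eq_one)
  have b: "sat E v V (fBit col 1 (snd t) Z) \<longleftrightarrow> card (V Z \<inter> M2) mod 2 = snd t"
    using sat_fOdd[of Z E col 1 M2 V v, OF assms(1,3,4)] assms(6) unfolding fBit_def
    by (cases "snd t = 1") (auto simp: odd_iff_mod_2_eq_one)
  show ?thesis unfolding fTyp_def ntyp_def using a b by (auto simp: prod_eq_iff)
qed

lemma sat_fNrel:
  assumes x: "x \<noteq> 9" and X: "X \<noteq> 7" "X \<noteq> 8" and so: "setok E S"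
    and c: "colok E col 0 M1" "colok E col 1 M2" and t: "fst t < 2" "snd t < 2"
  shows "sat E v V (fNrel col t x X) \<longleftrightarrow> NrelS S (ntyp M1 M2) t (v x) (V X)"
proof (cases "V X \<in> S")
  case False
  then show ?thesis unfolding fNrel_def NrelS_def using sat_fInS[OF so] by simp
next
  case True
  have XU: "V X \<subseteq> univ E" using so True unfolding setok_def by auto
  have SU: "\<And>Z. Z \<in> S \<Longrightarrow> Z \<subseteq> univ E" using so unfolding setok_def by auto
  have T1: "sat E v V (fTyp col t X) \<longleftrightarrow> ntyp M1 M2 (V X) = t"
    using sat_fTyp[of X E col M1 M2 V t v, OF X(2) c XU t] .
  have T2: "sat E v (V(7:=Z)) (fTyp col t 7) \<longleftrightarrow> ntyp M1 M2 Z = t" if "Z \<subseteq> univ E" for Z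
    using sat_fTyp[of 7 E col M1 M2 "V(7:=Z)" t v] c t that by simp
  have I2: "sat E v (V(7:=Z)) (fInS 7) \<longleftrightarrow> Z \<in> S" for Z using sat_fInS[OF so] by simp
  have NS1: "(\<exists>b\<in>univ E. b \<in> V X \<and> b \<noteq> v x) \<longleftrightarrow> V X \<noteq> {v x}" if "v x \<in> V X"
    using XU that by auto
  have NS2: "(\<exists>b\<in>univ E. b \<in> Z \<and> b \<noteq> v x) \<longleftrightarrow> Z \<noteq> {v x}" if "v x \<in> Z" "Z \<subseteq> univ E" for Z
    using that by auto
  have SB: "(\<forall>b\<in>univ E. b \<in> Z \<longrightarrow> b \<in> V X) \<and> \<not> (\<forall>b\<in>univ E. b \<in> V X \<longrightarrow> b \<in> Z) \<longleftrightarrow> Z \<subset> V X"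
    if "Z \<subseteq> univ E" for Z using that XU by auto
  have e: "sat E v V (fNrel col t x X) \<longleftrightarrow> V X \<in> S \<and> v x \<in> V X \<and> (\<exists>b\<in>univ E. b \<in> V X \<and> b \<noteq> v x) \<and>
     ntyp M1 M2 (V X) = t \<and> (\<forall>Z. Z \<subseteq> univ E \<longrightarrow> (Z \<in> S \<and> v x \<in> Z \<and> (\<forall>b\<in>univ E. b \<in> Z \<longrightarrow> b \<in> V X) \<and>
      \<not> (\<forall>b\<in>univ E. b \<in> V X \<longrightarrow> b \<in> Z) \<and> (\<exists>b\<in>univ E. b \<in> Z \<and> b \<noteq> v x)) \<longrightarrow> ntyp M1 M2 Z \<noteq> t)"
    unfolding fNrel_def using x X T1 T2 I2 sat_fInS[OF so] by simp
  show ?thesis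
  proof
    assume "sat E v V (fNrel col t x X)"
    then have h: "V X \<in> S" "v x \<in> V X" "\<exists>b\<in>univ E. b \<in> V X \<and> b \<noteq> v x" "ntyp M1 M2 (V X) = t"
      "\<forall>Z. Z \<subseteq> univ E \<longrightarrow> (Z \<in> S \<and> v x \<in> Z \<and> (\<forall>b\<in>univ E. b \<in> Z \<longrightarrow> b \<in> V X) \<and>
      \<not> (\<forall>b\<in>univ E. b \<in> V X \<longrightarrow> b \<in> Z) \<and> (\<exists>b\<in>univ E. b \<in> Z \<and> b \<noteq> v x)) \<longrightarrow> ntyp M1 M2 Z \<noteq> t"
      using e by blast+
    show "NrelS S (ntyp M1 M2) t (v x) (V X)"
      unfolding NrelS_def
    proof (intro conjI ballI impI)
      show "V X \<in> S" "v x \<in> V X" "ntyp M1 M2 (V X) = t" using h by auto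
      show "V X \<noteq> {v x}" using h(3) by auto
      fix Z assume Z: "Z \<in> S" "v x \<in> Z" "Z \<subset> V X" "Z \<noteq> {v x}"
      have ZU: "Z \<subseteq> univ E" using SU Z(1) .
      have "\<exists>b\<in>univ E. b \<in> Z \<and> b \<noteq> v x" using Z(2,4) ZU by auto
      moreover have "\<not> (\<forall>b\<in>univ E. b \<in> V X \<longrightarrow> b \<in> Z)" using Z(3) XU by auto
      ultimately show "ntyp M1 M2 Z \<noteq> t" using h(5) ZU Z by auto
    qed
  next
    assume N: "NrelS S (ntyp M1 M2) t (v x) (V X)"
    then have h: "V X \<in> S" "v x \<in> V X" "V X \<noteq> {v x}" "ntyp M1 M2 (V X) = t"
      "\<forall>Z\<in>S. v x \<in> Z \<longrightarrow> Z \<subset> V X \<longrightarrow> Z \<noteq> {v x} \<longrightarrow> ntyp M1 M2 Z \<noteq> t"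
      unfolding NrelS_def by blast+
    have "\<exists>b\<in>univ E. b \<in> V X \<and> b \<noteq> v x" using h(2,3) XU by auto
    moreover have "\<forall>Z. Z \<subseteq> univ E \<longrightarrow> (Z \<in> S \<and> v x \<in> Z \<and> (\<forall>b\<in>univ E. b \<in> Z \<longrightarrow> b \<in> V X) \<and>
      \<not> (\<forall>b\<in>univ E. b \<in> V X \<longrightarrow> b \<in> Z) \<and> (\<exists>b\<in>univ E. b \<in> Z \<and> b \<noteq> v x)) \<longrightarrow> ntyp M1 M2 Z \<noteq> t"
    proof (intro allI impI)
      fix Z assume ZU: "Z \<subseteq> univ E" and
        c: "Z \<in> S \<and> v x \<in> Z \<and> (\<forall>b\<in>univ E. b \<in> Z \<longrightarrow> b \<in> V X) \<and>
      \<not> (\<forall>b\<in>univ E. b \<in> V X \<longrightarrow> b \<in> Z) \<and> (\<exists>b\<in>univ E. b \<in> Z \<and> b \<noteq> v x)"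
      have "Z \<subset> V X" using c ZU XU by blast
      moreover have "Z \<noteq> {v x}" using c by auto
      ultimately show "ntyp M1 M2 Z \<noteq> t" using h(5) c by blast
    qed
    ultimately show "sat E v V (fNrel col t x X)" using e h by blast
  qed
qed

lemma ex_less3: "(\<exists>i<(3::nat). P i) \<longleftrightarrow> P 0 \<or> P 1 \<or> P 2"
proof -
  have "(i::nat) < 3 \<longleftrightarrow> i = 0 \<or> i = 1 \<or> i = 2" for i by auto
  then show ?thesis by auto
qed
lemma lt3: "(i::nat) < 3 \<longleftrightarrow> i = 0 \<or> i = 1 \<or> i = 2" by auto
lemma all_less3: "(\<forall>i<(3::nat). P i) \<longleftrightarrow> P 0 \<and> P 1 \<and> P 2"
  unfolding lt3 by auto

definition colour1 :: "string \<Rightarrow> 'e set \<Rightarrow> 'e struct \<Rightarrow> 'e struct" where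
  "colour1 c X A = \<lparr> univ = univ A, voc = voc A \<union> {RelSym c 1},
            rels = (rels A)(RelSym c 1 := {[a] | a. a \<in> X}),
            sets = sets A \<rparr>"

lemma colour1_fields[simp]: "univ (colour1 c X A) = univ A" "voc (colour1 c X A) = insert (RelSym c 1) (voc A)"
  by (auto simp: colour1_def)

lemma run_Colour: "run (Colour c # ts) A =
  (if RelSym c 1 \<notin> voc A then (\<Union>X\<in>{X. X \<subseteq> univ A}. run ts (colour1 c X A)) else {})"
  by (auto simp: colour_outputs_def colour1_def)

lemma run_Filter: "run (Filter \<phi> # ts) A = (if sat A (\<lambda>_. undefined) (\<lambda>_. {}) \<phi> then run ts A else {})"
  by simp

definition cpS :: "string list \<Rightarrow> ('e \<times> nat \<Rightarrow> 'e) \<Rightarrow> 'e struct \<Rightarrow> 'e struct" where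
  "cpS ns f A = \<lparr> univ = univ A \<union> f ` (univ A \<times> {..<length ns}),
            voc = voc A \<union> {RelSym (ns ! i) 2 | i. i < length ns},
            rels = (\<lambda>Q. if (\<exists>i<length ns. Q = RelSym (ns ! i) 2)
                        then {[a, f (a, i)] | a i. a \<in> univ A \<and> i < length ns \<and> Q = RelSym (ns ! i) 2}
                        else rels A Q),
            sets = sets A \<rparr>"

definition copyok :: "nat \<Rightarrow> ('e \<times> nat \<Rightarrow> 'e) \<Rightarrow> 'e set \<Rightarrow> bool" where
  "copyok k f V \<longleftrightarrow> inj_on f (V \<times> {..<k}) \<and> f ` (V \<times> {..<k}) \<inter> V = {}"

lemma copy_outputs_eq: "copy_outputs ns A = {cpS ns f A | f. copyok (length ns) f (univ A)}"
  unfolding copy_outputs_def cpS_def copyok_def by auto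

lemma run_Copy: "run (Copy ns # ts) A =
  (if \<forall>n\<in>set ns. RelSym n 2 \<notin> voc A then (\<Union>C\<in>copy_outputs ns A. run ts C) else {})"
  by simp

lemma run_Restrict: "run (Restrict \<phi> # ts) A = run ts (restrict_struct {a \<in> univ A. sat A (\<lambda>_. a) (\<lambda>_. {}) \<phi>} A)"
  by simp

lemma run_Interp: "run (Interp qs # ts) A = run ts (interp_struct A qs)"
  by simp

definition col5 :: "(nat \<Rightarrow> string) \<Rightarrow> (nat \<Rightarrow> 'e set) \<Rightarrow> 'e struct \<Rightarrow> 'e struct" where
  "col5 col X A = colour1 (col 4) (X 4) (colour1 (col 3) (X 3) (colour1 (col 2) (X 2)
      (colour1 (col 1) (X 1) (colour1 (col 0) (X 0) A))))"

lemma col5_fields: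
  "univ (col5 col X A) = univ A" "sets (col5 col X A) = sets A"
  "voc (col5 col X A) = voc A \<union> {RelSym (col 0) 1, RelSym (col 1) 1, RelSym (col 2) 1, RelSym (col 3) 1, RelSym (col 4) 1}"
  by (auto simp: col5_def colour1_def)

lemma lt5: "(j::nat) < 5 \<longleftrightarrow> j = 0 \<or> j = 1 \<or> j = 2 \<or> j = 3 \<or> j = 4" by auto

lemma col_dist:
  fixes col :: "nat \<Rightarrow> string"
  assumes inj: "inj_on col {..<5}"
  shows "col 0 \<noteq> col 1" "col 0 \<noteq> col 2" "col 0 \<noteq> col 3" "col 0 \<noteq> col 4"
    "col 1 \<noteq> col 2" "col 1 \<noteq> col 3" "col 1 \<noteq> col 4" "col 2 \<noteq> col 3" "col 2 \<noteq> col 4" "col 3 \<noteq> col 4"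
proof -
  have h: "\<And>a b. a < 5 \<Longrightarrow> b < 5 \<Longrightarrow> col a = col b \<Longrightarrow> a = b" using inj unfolding inj_on_def by auto
  show "col 0 \<noteq> col 1" using h[of 0 1] by auto
  show "col 0 \<noteq> col 2" using h[of 0 2] by auto
  show "col 0 \<noteq> col 3" using h[of 0 3] by auto
  show "col 0 \<noteq> col 4" using h[of 0 4] by auto
  show "col 1 \<noteq> col 2" using h[of 1 2] by auto
  show "col 1 \<noteq> col 3" using h[of 1 3] by auto
  show "col 1 \<noteq> col 4" using h[of 1 4] by auto
  show "col 2 \<noteq> col 3" using h[of 2 3] by auto
  show "col 2 \<noteq> col 4" using h[of 2 4] by auto
  show "col 3 \<noteq> col 4" using h[of 3 4] by auto
qed

lemma col5_rels:
  assumes inj: "inj_on col {..<5}" and j: "j < 5"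
  shows "rels (col5 col X A) (RelSym (col j) 1) = {[a] | a. a \<in> X j}"
proof -
  note d = col_dist[OF inj]
  have "j = 0 \<or> j = 1 \<or> j = 2 \<or> j = 3 \<or> j = 4" using j by auto
  then show ?thesis
  proof (elim disjE)
    assume "j = 0" then show ?thesis using d unfolding col5_def colour1_def by (simp add: fun_upd_def)
  next
    assume "j = 1" then show ?thesis using d unfolding col5_def colour1_def by (simp add: fun_upd_def)
  next
    assume "j = 2" then show ?thesis using d unfolding col5_def colour1_def by (simp add: fun_upd_def)
  next
    assume "j = 3" then show ?thesis using d unfolding col5_def colour1_def by (simp add: fun_upd_def)
  next
    assume "j = 4" then show ?thesis using d unfolding col5_def colour1_def by (simp add: fun_upd_def)
  qed
qed

lemma col5_rels_other:
  assumes "Q \<noteq> RelSym (col 0) 1" "Q \<noteq> RelSym (col 1) 1" "Q \<noteq> RelSym (col 2) 1" "Q \<noteq> RelSym (col 3) 1" "Q \<noteq> RelSym (col 4) 1"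
  shows "rels (col5 col X A) Q = rels A Q"
  using assms unfolding col5_def colour1_def by simp

lemma mem_run_Colour: "RelSym c 1 \<notin> voc A \<Longrightarrow>
   B \<in> run (Colour c # ts) A \<longleftrightarrow> (\<exists>X. X \<subseteq> univ A \<and> B \<in> run ts (colour1 c X A))"
  unfolding run_Colour by auto

lemma run_col5:
  assumes inj: "inj_on col {..<5}" and fr: "\<forall>j<5. RelSym (col j) 1 \<notin> voc A"
  shows "B \<in> run (Colour (col 0) # Colour (col 1) # Colour (col 2) # Colour (col 3) # Colour (col 4) # ts) A \<longleftrightarrow>
    (\<exists>X. (\<forall>j<5. X j \<subseteq> univ A) \<and> B \<in> run ts (col5 col X A))"
proof -
  have ne: "\<And>k j. k < 5 \<Longrightarrow> j < 5 \<Longrightarrow> k \<noteq> j \<Longrightarrow> col k \<noteq> col j" using inj unfolding inj_on_def by auto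
  have f: "RelSym (col 0) 1 \<notin> voc A" "RelSym (col 1) 1 \<notin> voc A" "RelSym (col 2) 1 \<notin> voc A"
     "RelSym (col 3) 1 \<notin> voc A" "RelSym (col 4) 1 \<notin> voc A" using fr by auto
  note d = col_dist[OF inj]
  have "B \<in> run (Colour (col 0) # Colour (col 1) # Colour (col 2) # Colour (col 3) # Colour (col 4) # ts) A \<longleftrightarrow>
    (\<exists>X0. X0 \<subseteq> univ A \<and> (\<exists>X1. X1 \<subseteq> univ A \<and> (\<exists>X2. X2 \<subseteq> univ A \<and> (\<exists>X3. X3 \<subseteq> univ A \<and>
       (\<exists>X4. X4 \<subseteq> univ A \<and> B \<in> run ts (colour1 (col 4) X4 (colour1 (col 3) X3 (colour1 (col 2) X2
      (colour1 (col 1) X1 (colour1 (col 0) X0 A))))))))))"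
    using f d d[symmetric] by (simp add: mem_run_Colour del: run.simps)
  also have "\<dots> \<longleftrightarrow> (\<exists>X. (\<forall>j<5. X j \<subseteq> univ A) \<and> B \<in> run ts (col5 col X A))"
  proof
    assume "\<exists>X0. X0 \<subseteq> univ A \<and> (\<exists>X1. X1 \<subseteq> univ A \<and> (\<exists>X2. X2 \<subseteq> univ A \<and> (\<exists>X3. X3 \<subseteq> univ A \<and>
       (\<exists>X4. X4 \<subseteq> univ A \<and> B \<in> run ts (colour1 (col 4) X4 (colour1 (col 3) X3 (colour1 (col 2) X2
      (colour1 (col 1) X1 (colour1 (col 0) X0 A)))))))))"
    then obtain X0 X1 X2 X3 X4 where X: "X0 \<subseteq> univ A" "X1 \<subseteq> univ A" "X2 \<subseteq> univ A" "X3 \<subseteq> univ A" "X4 \<subseteq> univ A"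
        and B: "B \<in> run ts (colour1 (col 4) X4 (colour1 (col 3) X3 (colour1 (col 2) X2 (colour1 (col 1) X1 (colour1 (col 0) X0 A)))))"
      by blast
    define XX where "XX j = (if j = 0 then X0 else if j = 1 then X1 else if j = 2 then X2 else if j = 3 then X3 else X4)" for j :: nat
    have "\<forall>j<5. XX j \<subseteq> univ A" using X unfolding XX_def by auto
    moreover have "col5 col XX A = colour1 (col 4) X4 (colour1 (col 3) X3 (colour1 (col 2) X2 (colour1 (col 1) X1 (colour1 (col 0) X0 A))))"
      unfolding col5_def XX_def by simp
    ultimately show "\<exists>X. (\<forall>j<5. X j \<subseteq> univ A) \<and> B \<in> run ts (col5 col X A)" using B by (intro exI[of _ XX]) simp
  next
    assume "\<exists>X. (\<forall>j<5. X j \<subseteq> univ A) \<and> B \<in> run ts (col5 col X A)"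
    then obtain X where X: "\<forall>j<5. X j \<subseteq> univ A" and B: "B \<in> run ts (col5 col X A)" by auto
    have X': "X 0 \<subseteq> univ A" "X 1 \<subseteq> univ A" "X 2 \<subseteq> univ A" "X 3 \<subseteq> univ A" "X 4 \<subseteq> univ A" using X by auto
    show "\<exists>X0. X0 \<subseteq> univ A \<and> (\<exists>X1. X1 \<subseteq> univ A \<and> (\<exists>X2. X2 \<subseteq> univ A \<and> (\<exists>X3. X3 \<subseteq> univ A \<and>
       (\<exists>X4. X4 \<subseteq> univ A \<and> B \<in> run ts (colour1 (col 4) X4 (colour1 (col 3) X3 (colour1 (col 2) X2
      (colour1 (col 1) X1 (colour1 (col 0) X0 A)))))))))"
      apply (rule exI[where x="X 0"], rule conjI[OF X'(1)])
      apply (rule exI[where x="X 1"], rule conjI[OF X'(2)])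
      apply (rule exI[where x="X 2"], rule conjI[OF X'(3)])
      apply (rule exI[where x="X 3"], rule conjI[OF X'(4)])
      apply (rule exI[where x="X 4"], rule conjI[OF X'(5)])
      using B unfolding col5_def by assumption
  qed
  finally show ?thesis .
qed

lemma free_fNrel_eq:
  "x \<noteq> 9 \<Longrightarrow> X \<noteq> 7 \<Longrightarrow> X \<noteq> 8 \<Longrightarrow> fo_free (fNrel col t x X) = {x}"
  "x \<noteq> 9 \<Longrightarrow> X \<noteq> 7 \<Longrightarrow> X \<noteq> 8 \<Longrightarrow> so_free (fNrel col t x X) = {X}"
  by (auto simp: fNrel_def)

definition atomF :: "symbol \<Rightarrow> form" where
  "atomF Q = (if is_rel Q then RelAtom Q [0..<arity Q] else SetAtom Q [0..<arity Q])"

locale tnames =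
  fixes \<Sigma> :: "symbol set" and sl :: "symbol list" and col :: "nat \<Rightarrow> string" and cp :: "nat \<Rightarrow> string"
  assumes sl: "set sl = \<Sigma>" and sld: "distinct sl"
    and setin: "SET \<in> \<Sigma>" and ancn: "ancestor \<notin> \<Sigma>"
    and colinj: "inj_on col {..<5}" and cpinj: "inj_on cp {..<3}"
    and colfr: "\<And>j k. j < 5 \<Longrightarrow> RelSym (col j) k \<notin> \<Sigma>"
    and cpfr: "\<And>i k. i < 3 \<Longrightarrow> RelSym (cp i) k \<notin> \<Sigma>"
begin

definition tc :: "nat \<Rightarrow> nat \<times> nat" where
  "tc i = (if i = 0 then (1,0) else if i = 1 then (0,1) else (1,1))"

definition fRep :: "nat \<Rightarrow> form" where
  "fRep i = ExFO 2 (Conj (fCol col (i+2) 2) (fNrel col (tc i) 2 2))"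
definition fUniq :: "nat \<Rightarrow> form" where
  "fUniq i = fAllS 2 (fAll 2 (fAll 3 (fImp (Conj (fCol col (i+2) 2) (Conj (fCol col (i+2) 3)
      (Conj (fNrel col (tc i) 2 2) (fNrel col (tc i) 3 2)))) (Eq 2 3))))"
definition fFilter :: form where
  "fFilter = Conj (fAllS 2 (fImp (Conj (fInS 2) (ExFO 2 (Conj (Mem 2 2) (fNS 2 2))))
      (fOr (fRep 0) (fOr (fRep 1) (fRep 2))))) (Conj (fUniq 0) (Conj (fUniq 1) (fUniq 2)))"
definition fIsCopy :: "nat \<Rightarrow> form" where
  "fIsCopy x = ExFO 2 (fOr (fCp cp 0 2 x) (fOr (fCp cp 1 2 x) (fCp cp 2 2 x)))"
definition fKN :: "nat \<Rightarrow> nat \<Rightarrow> nat \<Rightarrow> form" where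
  "fKN i x X = ExFO 2 (Conj (fCp cp i 2 x) (Conj (fCol col (i+2) 2) (fNrel col (tc i) 2 X)))"
definition fRestr :: form where
  "fRestr = fOr (Neg (fIsCopy 0)) (fOr (ExSO 2 (fKN 0 0 2)) (fOr (ExSO 2 (fKN 1 0 2)) (ExSO 2 (fKN 2 0 2))))"
definition fNode :: "nat \<Rightarrow> nat \<Rightarrow> form" where
  "fNode x X = fOr (Conj (Neg (fIsCopy x)) (Conj (fInS X) (fSingle x X)))
     (fOr (fKN 0 x X) (fOr (fKN 1 x X) (fKN 2 x X)))"
definition fAnc :: form where
  "fAnc = ExSO 0 (ExSO 1 (Conj (fNode 0 0) (Conj (fNode 1 1) (fSub 1 0))))"

definition qs :: "(symbol \<times> form) list" where
  "qs = map (\<lambda>Q. (Q, atomF Q)) sl @ [(ancestor, fAnc)]"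

definition ks :: "string list" where "ks = map cp [0..<3]"

definition tau :: "atomic list" where
  "tau = [Colour (col 0), Colour (col 1), Colour (col 2), Colour (col 3), Colour (col 4),
          Filter fFilter, Copy ks, Restrict fRestr, Interp qs]"

lemma free_fKN: "x \<noteq> 2 \<Longrightarrow> x \<noteq> 9 \<Longrightarrow> X \<noteq> 7 \<Longrightarrow> X \<noteq> 8 \<Longrightarrow> fo_free (fKN i x X) = {x} \<and> so_free (fKN i x X) = {X}"
  by (auto simp: fKN_def free_fNrel_eq)

lemma free_fIsCopy: "x \<noteq> 2 \<Longrightarrow> fo_free (fIsCopy x) = {x} \<and> so_free (fIsCopy x) = {}"
  by (auto simp: fIsCopy_def)

lemma wf_tau: "wf_transduction tau"
proof -
  have f1: "fo_free fFilter = {} \<and> so_free fFilter = {}"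
    by (auto simp: fFilter_def fRep_def fUniq_def free_fNrel_eq)
  have f2: "fo_free fRestr \<subseteq> {0} \<and> so_free fRestr = {}"
    by (auto simp: fRestr_def free_fKN free_fIsCopy)
  have f3: "fo_free fAnc \<subseteq> {..<2} \<and> so_free fAnc = {}"
    by (auto simp: fAnc_def fNode_def free_fKN free_fIsCopy)
  have d: "distinct (map fst qs)" using sld ancn sl by (auto simp: qs_def comp_def)
  have ks: "distinct ks" using cpinj unfolding ks_def by (simp add: distinct_map atLeast0LessThan)
  have q: "\<forall>(Q, \<phi>)\<in>set qs. if is_rel Q then fo_free \<phi> \<subseteq> {..<arity Q} \<and> so_free \<phi> = {}
                        else fo_free \<phi> = {} \<and> so_free \<phi> \<subseteq> {..<arity Q}"
    using f3 by (auto simp: qs_def atomF_def)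
  show ?thesis unfolding wf_transduction_def tau_def using f1 f2 d ks q by simp
qed

end

context tnames
begin

definition CC :: "(nat \<Rightarrow> 'e set) \<Rightarrow> ('e \<times> nat \<Rightarrow> 'e) \<Rightarrow> 'e struct \<Rightarrow> 'e struct" where
  "CC X f A = cpS ks f (col5 col X A)"
definition Wset :: "(nat \<Rightarrow> 'e set) \<Rightarrow> ('e \<times> nat \<Rightarrow> 'e) \<Rightarrow> 'e struct \<Rightarrow> 'e set" where
  "Wset X f A = {a \<in> univ (CC X f A). sat (CC X f A) (\<lambda>_. a) (\<lambda>_. {}) fRestr}"
definition DD :: "(nat \<Rightarrow> 'e set) \<Rightarrow> ('e \<times> nat \<Rightarrow> 'e) \<Rightarrow> 'e struct \<Rightarrow> 'e struct" where
  "DD X f A = restrict_struct (Wset X f A) (CC X f A)"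
definition out :: "(nat \<Rightarrow> 'e set) \<Rightarrow> ('e \<times> nat \<Rightarrow> 'e) \<Rightarrow> 'e struct \<Rightarrow> 'e struct" where
  "out X f A = interp_struct (DD X f A) qs"

lemma ks_nth: "i < 3 \<Longrightarrow> ks ! i = cp i" "length ks = 3"
  by (auto simp: ks_def)

lemma cp_eq: "i < 3 \<Longrightarrow> i' < 3 \<Longrightarrow> cp i = cp i' \<longleftrightarrow> i = i'"
  using cpinj unfolding inj_on_def by auto

lemma run_tau:
  assumes A: "is_structure \<Sigma> A"
  shows "B \<in> run tau A \<longleftrightarrow> (\<exists>X f. (\<forall>j<5. X j \<subseteq> univ A) \<and> sat (col5 col X A) (\<lambda>_. undefined) (\<lambda>_. {}) fFilter \<and>
     copyok 3 f (univ A) \<and> B = out X f A)"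
proof -
  have vA: "voc A = \<Sigma>" using A unfolding is_structure_def by auto
  have fr: "\<forall>j<5. RelSym (col j) 1 \<notin> voc A" using colfr vA by auto
  have cfr: "\<forall>n\<in>set ks. RelSym n 2 \<notin> voc (col5 col X A)" for X
    using cpfr vA unfolding col5_fields ks_def by auto
  have "B \<in> run tau A \<longleftrightarrow> (\<exists>X. (\<forall>j<5. X j \<subseteq> univ A) \<and>
      B \<in> run [Filter fFilter, Copy ks, Restrict fRestr, Interp qs] (col5 col X A))"
    unfolding tau_def by (rule run_col5[OF colinj fr])
  also have "\<dots> \<longleftrightarrow> (\<exists>X f. (\<forall>j<5. X j \<subseteq> univ A) \<and> sat (col5 col X A) (\<lambda>_. undefined) (\<lambda>_. {}) fFilter \<and>
     copyok 3 f (univ A) \<and> B = out X f A)"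
  proof -
    have "B \<in> run [Filter fFilter, Copy ks, Restrict fRestr, Interp qs] (col5 col X A) \<longleftrightarrow>
      sat (col5 col X A) (\<lambda>_. undefined) (\<lambda>_. {}) fFilter \<and> (\<exists>f. copyok 3 f (univ A) \<and> B = out X f A)" for X
      using cfr[of X] by (auto simp: copy_outputs_eq ks_nth col5_fields out_def DD_def Wset_def CC_def)
    then show ?thesis by blast
  qed
  finally show ?thesis .
qed

lemma CC_univ: "univ (CC X f A) = univ A \<union> f ` (univ A \<times> {..<3})"
  by (simp add: CC_def cpS_def col5_fields ks_nth)
lemma CC_sets: "sets (CC X f A) = sets A"
  by (simp add: CC_def cpS_def col5_fields)
lemma CC_rels_cp:
  assumes i: "i < 3"
  shows "rels (CC X f A) (RelSym (cp i) 2) = {[a, f (a, i)] | a. a \<in> univ A}"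
proof -
  have e: "i' < 3 \<Longrightarrow> RelSym (cp i) 2 = RelSym (ks ! i') 2 \<longleftrightarrow> i' = i" for i'
    using i ks_nth cp_eq by auto
  have ex: "\<exists>i'<3. RelSym (cp i) 2 = RelSym (ks ! i') 2" using e i by blast
  show ?thesis unfolding CC_def cpS_def using ex e ks_nth(2) by (auto simp: col5_fields)
qed
lemma CC_rels_other: "(\<forall>i<3. Q \<noteq> RelSym (cp i) 2) \<Longrightarrow> rels (CC X f A) Q = rels (col5 col X A) Q"
  unfolding CC_def cpS_def using ks_nth by auto

lemma CC_colok: "j < 5 \<Longrightarrow> colok (CC X f A) col j (X j)"
  unfolding colok_def using CC_rels_other[of "RelSym (col j) 1" X f A] col5_rels[OF colinj, of j X A] by auto

lemma col5_colok: "j < 5 \<Longrightarrow> colok (col5 col X A) col j (X j)"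
  unfolding colok_def using col5_rels[OF colinj, of j X A] by auto

end

lemma map_of_map_in: "Q \<in> set xs \<Longrightarrow> map_of (map (\<lambda>Q. (Q, g Q)) xs) Q = Some (g Q)"
  by (induction xs) auto

context tnames
begin

lemma tc_lt: "fst (tc i) < 2" "snd (tc i) < 2" by (auto simp: tc_def)

lemma tc_inj: "i < 3 \<Longrightarrow> j < 3 \<Longrightarrow> tc i = tc j \<longleftrightarrow> i = j"
  unfolding tc_def lt3 by auto

lemma sat_fIsCopy:
  assumes x: "x \<noteq> 2" and P: "\<And>i a b. i < 3 \<Longrightarrow> [a,b] \<in> rels E (RelSym (cp i) 2) \<longleftrightarrow> P i a b"
  shows "sat E v V (fIsCopy x) \<longleftrightarrow> (\<exists>y\<in>univ E. \<exists>i<3. P i y (v x))"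
proof -
  have "sat E v V (fIsCopy x) \<longleftrightarrow> (\<exists>y\<in>univ E. P 0 y (v x) \<or> P 1 y (v x) \<or> P 2 y (v x))"
    unfolding fIsCopy_def using x P[of 0] P[of 1] P[of 2] by simp
  then show ?thesis unfolding ex_less3 .
qed

lemma sat_fKN:
  assumes x: "x \<noteq> 2" and X: "X \<noteq> 7" "X \<noteq> 8" and i: "i < 3"
    and P: "\<And>a b. [a,b] \<in> rels E (RelSym (cp i) 2) \<longleftrightarrow> P a b"
    and so: "setok E S" and c: "colok E col 0 M1" "colok E col 1 M2" "colok E col (i+2) R"
  shows "sat E v V (fKN i x X) \<longleftrightarrow> (\<exists>y\<in>univ E. P y (v x) \<and> y \<in> R \<and> NrelS S (ntyp M1 M2) (tc i) y (V X))"
proof -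
  have N: "sat E (v(2:=y)) V (fNrel col (tc i) 2 X) \<longleftrightarrow> NrelS S (ntyp M1 M2) (tc i) y (V X)" for y
    using sat_fNrel[OF _ X so c(1,2) tc_lt, of 2 "v(2:=y)" V] by simp
  show ?thesis unfolding fKN_def using x N P sat_fCol[OF c(3)] by simp
qed

definition isc :: "('e \<times> nat \<Rightarrow> 'e) \<Rightarrow> 'e struct \<Rightarrow> 'e \<Rightarrow> bool" where
  "isc f A x \<longleftrightarrow> (\<exists>y\<in>univ A. \<exists>i<3. x = f (y, i))"

lemma CC_P: "i < 3 \<Longrightarrow> [a,b] \<in> rels (CC X f A) (RelSym (cp i) 2) \<longleftrightarrow> a \<in> univ A \<and> b = f (a, i)"
  by (auto simp: CC_rels_cp)

lemma W_orig:
  assumes cf: "copyok 3 f (univ A)"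
  shows "univ A \<subseteq> Wset X f A"
proof
  fix a assume a: "a \<in> univ A"
  have nc: "\<not> (\<exists>y\<in>univ (CC X f A). \<exists>i<3. y \<in> univ A \<and> a = f (y, i))"
    using cf a unfolding copyok_def by auto
  have e: "sat (CC X f A) (\<lambda>_. a) (\<lambda>_. {}) (fIsCopy 0) \<longleftrightarrow> (\<exists>y\<in>univ (CC X f A). \<exists>i<3. y \<in> univ A \<and> a = f (y, i))"
    by (rule sat_fIsCopy[where P="\<lambda>i a b. a \<in> univ A \<and> b = f (a, i)" and x=0 and E="CC X f A" and v="\<lambda>_. a" and V="\<lambda>_. {}", simplified])
       (simp add: CC_P)
  have "sat (CC X f A) (\<lambda>_. a) (\<lambda>_. {}) (Neg (fIsCopy 0))" using e nc by simp
  then show "a \<in> Wset X f A" unfolding Wset_def fRestr_def using a CC_univ[of X f A] by auto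
qed

lemma W_sub: "Wset X f A \<subseteq> univ (CC X f A)" unfolding Wset_def by auto

lemma DD_fields:
  "univ (DD X f A) = Wset X f A"
  "rels (DD X f A) Q = {xs \<in> rels (CC X f A) Q. set xs \<subseteq> Wset X f A}"
  "sets (DD X f A) Q = {Xs \<in> sets A Q. \<forall>Y\<in>set Xs. Y \<subseteq> Wset X f A}"
  unfolding DD_def restrict_struct_def using W_sub[of X f A] CC_sets[of X f A] by auto

definition AncR :: "(nat \<Rightarrow> 'e set) \<Rightarrow> ('e \<times> nat \<Rightarrow> 'e) \<Rightarrow> 'e struct \<Rightarrow> 'e list set" where
  "AncR X f A = {xs. length xs = 2 \<and> set xs \<subseteq> Wset X f A \<and> sat (DD X f A) (\<lambda>i. xs ! i) (\<lambda>_. {}) fAnc}"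

lemma qs_lookup: "Q \<in> \<Sigma> \<Longrightarrow> the (map_of qs Q) = atomF Q" "the (map_of qs ancestor) = fAnc"
proof -
  show "Q \<in> \<Sigma> \<Longrightarrow> the (map_of qs Q) = atomF Q"
    using map_of_map_in[of Q sl atomF] sl unfolding qs_def by (simp add: map_add_find_right)
  have "map_of (map (\<lambda>Q. (Q, atomF Q)) sl) ancestor = None" using ancn sl by (auto simp: map_of_eq_None_iff)
  then show "the (map_of qs ancestor) = fAnc" unfolding qs_def by (simp add: map_add_def)
qed

lemma voc_qs: "fst ` set qs = insert ancestor \<Sigma>"
  using sl unfolding qs_def by (simp add: image_image)

lemma out_fields:
  assumes A: "is_structure \<Sigma> A" and cf: "copyok 3 f (univ A)"
  shows "univ (out X f A) = Wset X f A"
    "voc (out X f A) = insert ancestor \<Sigma>"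
    "rels (out X f A) Q = (if Q = ancestor then AncR X f A else if Q \<in> \<Sigma> then rels A Q else {})"
    "sets (out X f A) Q = (if Q \<in> \<Sigma> then sets A Q else {})"
proof -
  have Wo: "univ A \<subseteq> Wset X f A" using W_orig[OF cf] .
  show "univ (out X f A) = Wset X f A" unfolding out_def interp_struct_def using DD_fields(1)[of X f A] by simp
  show "voc (out X f A) = insert ancestor \<Sigma>" unfolding out_def interp_struct_def using voc_qs by simp
  show "rels (out X f A) Q = (if Q = ancestor then AncR X f A else if Q \<in> \<Sigma> then rels A Q else {})"
  proof (cases "Q = ancestor")
    case True
    then show ?thesis unfolding out_def interp_struct_def AncR_def using voc_qs qs_lookup DD_fields(1)[of X f A] by simp
  next
    case False
    show ?thesis
    proof (cases "Q \<in> \<Sigma>")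
      case QS: True
      show ?thesis
      proof (cases "is_rel Q")
        case True
        have ncp: "\<forall>i<3. Q \<noteq> RelSym (cp i) 2" using cpfr QS by auto
        have ncol: "Q \<noteq> RelSym (col 0) 1" "Q \<noteq> RelSym (col 1) 1" "Q \<noteq> RelSym (col 2) 1"
          "Q \<noteq> RelSym (col 3) 1" "Q \<noteq> RelSym (col 4) 1" using colfr QS by auto
        have rC: "rels (CC X f A) Q = rels A Q"
          using CC_rels_other[OF ncp, where X=X and f=f and A=A] col5_rels_other[OF ncol, where X=X and A=A] by simp
        have wfr: "\<forall>xs\<in>rels A Q. length xs = arity Q \<and> set xs \<subseteq> univ A"
          using A QS True unfolding is_structure_def by auto
        have "rels (out X f A) Q = {xs. length xs = arity Q \<and> set xs \<subseteq> Wset X f A \<and>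
             map (\<lambda>i. xs ! i) [0..<arity Q] \<in> rels (DD X f A) Q}"
          unfolding out_def interp_struct_def using voc_qs qs_lookup(1)[OF QS] True QS DD_fields(1)[of X f A]
          by (simp add: atomF_def)
        also have "\<dots> = rels A Q"
        proof (intro equalityI subsetI)
          fix xs assume h: "xs \<in> {xs. length xs = arity Q \<and> set xs \<subseteq> Wset X f A \<and>
             map (\<lambda>i. xs ! i) [0..<arity Q] \<in> rels (DD X f A) Q}"
          then have "map (\<lambda>i. xs ! i) [0..<arity Q] = xs" using map_nth[of xs] by simp
          then show "xs \<in> rels A Q" using h DD_fields(2)[of X f A] rC by auto
        next
          fix xs assume xs: "xs \<in> rels A Q"
          then have l: "length xs = arity Q" "set xs \<subseteq> univ A" using wfr by auto
          then have m: "map (\<lambda>i. xs ! i) [0..<arity Q] = xs" using map_nth[of xs] by simp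
          show "xs \<in> {xs. length xs = arity Q \<and> set xs \<subseteq> Wset X f A \<and>
             map (\<lambda>i. xs ! i) [0..<arity Q] \<in> rels (DD X f A) Q}"
            unfolding mem_Collect_eq m using l DD_fields(2)[of X f A] rC xs Wo by auto
        qed
        finally show ?thesis using False QS by simp
      next
        case nr: False
        have "rels A Q = {}" using A nr unfolding is_structure_def by auto
        then show ?thesis unfolding out_def interp_struct_def using nr False QS by simp
      qed
    next
      case nQS: False
      then show ?thesis unfolding out_def interp_struct_def using voc_qs False by simp
    qed
  qed
  show "sets (out X f A) Q = (if Q \<in> \<Sigma> then sets A Q else {})"
  proof (cases "Q \<in> \<Sigma> \<and> \<not> is_rel Q")
    case True
    then have QS: "Q \<in> \<Sigma>" and nr: "\<not> is_rel Q" by auto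
    have wfs: "\<forall>Xs\<in>sets A Q. length Xs = arity Q \<and> (\<forall>Y\<in>set Xs. Y \<subseteq> univ A)"
      using A QS nr unfolding is_structure_def by auto
    have "sets (out X f A) Q = {Xs. length Xs = arity Q \<and> (\<forall>Y\<in>set Xs. Y \<subseteq> Wset X f A) \<and>
             map (\<lambda>i. Xs ! i) [0..<arity Q] \<in> sets (DD X f A) Q}"
      unfolding out_def interp_struct_def using voc_qs qs_lookup(1)[OF QS] nr QS DD_fields(1)[of X f A]
      by (simp add: atomF_def)
    also have "\<dots> = sets A Q"
    proof (intro equalityI subsetI)
      fix Xs assume h: "Xs \<in> {Xs. length Xs = arity Q \<and> (\<forall>Y\<in>set Xs. Y \<subseteq> Wset X f A) \<and>
             map (\<lambda>i. Xs ! i) [0..<arity Q] \<in> sets (DD X f A) Q}"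
      then have "map (\<lambda>i. Xs ! i) [0..<arity Q] = Xs" using map_nth[of Xs] by simp
      then show "Xs \<in> sets A Q" using h DD_fields(3)[of X f A] by auto
    next
      fix Xs assume xs: "Xs \<in> sets A Q"
      then have l: "length Xs = arity Q" "\<forall>Y\<in>set Xs. Y \<subseteq> univ A" using wfs by auto
      then have m: "map (\<lambda>i. Xs ! i) [0..<arity Q] = Xs" using map_nth[of Xs] by simp
      show "Xs \<in> {Xs. length Xs = arity Q \<and> (\<forall>Y\<in>set Xs. Y \<subseteq> Wset X f A) \<and>
             map (\<lambda>i. Xs ! i) [0..<arity Q] \<in> sets (DD X f A) Q}"
        unfolding mem_Collect_eq m using l DD_fields(3)[of X f A] xs Wo by blast
    qed
    finally show ?thesis using QS by simp
  next
    case False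
    then have "sets A Q = {}" using A unfolding is_structure_def by auto
    moreover have "\<not> (\<not> is_rel Q \<and> Q \<in> fst ` set qs)" using False voc_qs by auto
    ultimately show ?thesis unfolding out_def interp_struct_def by (simp; blast)
  qed
qed

lemma overlay_out:
  assumes A: "is_structure \<Sigma> A" and cf: "copyok 3 f (univ A)"
  shows "substruct A (out X f A)"
proof -
  have vA: "voc A = \<Sigma>" using A unfolding is_structure_def by auto
  show ?thesis unfolding substruct_def using out_fields[OF A cf] W_orig[OF cf] vA ancn by auto
qed

lemma overlay_tau: "overlay_on \<Sigma> tau TYPE('e)"
  unfolding overlay_on_def
proof (intro allI impI ballI)
  fix A :: "'e struct" and B assume A: "is_structure \<Sigma> A" and B: "B \<in> run tau A"
  then obtain X f where "copyok 3 f (univ A)" "B = out X f A" using run_tau[OF A] by blast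
  then show "substruct A B" using overlay_out[OF A] by simp
qed

end

context tnames
begin

lemma sat_fRep:
  assumes so: "setok E S" and c: "\<And>j. j < 5 \<Longrightarrow> colok E col j (X j)" and i: "i < 3"
  shows "sat E v V (fRep i) \<longleftrightarrow> (\<exists>a\<in>univ E. a \<in> X (i+2) \<and> NrelS S (ntyp (X 0) (X 1)) (tc i) a (V 2))"
proof -
  have N: "sat E (v(2:=a)) V (fNrel col (tc i) 2 2) \<longleftrightarrow> NrelS S (ntyp (X 0) (X 1)) (tc i) a (V 2)" for a
    using sat_fNrel[OF _ _ _ so c[of 0] c[of 1] tc_lt, of 2 2 "v(2:=a)" V] by simp
  have C: "sat E (v(2:=a)) V (fCol col (i+2) 2) \<longleftrightarrow> a \<in> X (i+2)" for a
    using sat_fCol[OF c[of "i+2"]] i by simp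
  show ?thesis unfolding fRep_def using N C by simp
qed

lemma sat_fUniq:
  assumes so: "setok E S" and c: "\<And>j. j < 5 \<Longrightarrow> colok E col j (X j)" and i: "i < 3"
  shows "sat E v V (fUniq i) \<longleftrightarrow> (\<forall>Y. Y \<subseteq> univ E \<longrightarrow> (\<forall>a\<in>univ E. \<forall>b\<in>univ E.
     a \<in> X (i+2) \<and> b \<in> X (i+2) \<and> NrelS S (ntyp (X 0) (X 1)) (tc i) a Y \<and> NrelS S (ntyp (X 0) (X 1)) (tc i) b Y \<longrightarrow> a = b))"
proof -
  have N: "sat E v' V' (fNrel col (tc i) x 2) \<longleftrightarrow> NrelS S (ntyp (X 0) (X 1)) (tc i) (v' x) (V' 2)" if "x \<noteq> 9" for v' V' x
    using sat_fNrel[OF that _ _ so c[of 0] c[of 1] tc_lt, of 2 v' V'] by simp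
  have C: "sat E v' V' (fCol col (i+2) x) \<longleftrightarrow> v' x \<in> X (i+2)" for v' V' x
    using sat_fCol[OF c[of "i+2"]] i by simp
  show ?thesis unfolding fUniq_def using N C by simp
qed

lemma sat_fFilter:
  assumes so: "setok E S" and c: "\<And>j. j < 5 \<Longrightarrow> colok E col j (X j)"
  shows "sat E v V fFilter \<longleftrightarrow>
    (\<forall>Y. Y \<subseteq> univ E \<longrightarrow> Y \<in> S \<and> (\<exists>a\<in>univ E. a \<in> Y \<and> (\<exists>b\<in>univ E. b \<in> Y \<and> b \<noteq> a)) \<longrightarrow>
       (\<exists>i<3. \<exists>a\<in>univ E. a \<in> X (i+2) \<and> NrelS S (ntyp (X 0) (X 1)) (tc i) a Y)) \<and>
    (\<forall>i<3. \<forall>Y. Y \<subseteq> univ E \<longrightarrow> (\<forall>a\<in>univ E. \<forall>b\<in>univ E.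
     a \<in> X (i+2) \<and> b \<in> X (i+2) \<and> NrelS S (ntyp (X 0) (X 1)) (tc i) a Y \<and> NrelS S (ntyp (X 0) (X 1)) (tc i) b Y \<longrightarrow> a = b))"
proof -
  have R: "sat E v' V' (fRep i) \<longleftrightarrow> (\<exists>a\<in>univ E. a \<in> X (i+2) \<and> NrelS S (ntyp (X 0) (X 1)) (tc i) a (V' 2))"
    if "i < 3" for v' V' i using sat_fRep[OF so c that] .
  have U: "sat E v V (fUniq i) \<longleftrightarrow> (\<forall>Y. Y \<subseteq> univ E \<longrightarrow> (\<forall>a\<in>univ E. \<forall>b\<in>univ E.
     a \<in> X (i+2) \<and> b \<in> X (i+2) \<and> NrelS S (ntyp (X 0) (X 1)) (tc i) a Y \<and> NrelS S (ntyp (X 0) (X 1)) (tc i) b Y \<longrightarrow> a = b))"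
    if "i < 3" for i using sat_fUniq[OF so c that] .
  have R3: "sat E v' V' (fOr (fRep 0) (fOr (fRep 1) (fRep 2))) \<longleftrightarrow>
     (\<exists>i<3. \<exists>a\<in>univ E. a \<in> X (i+2) \<and> NrelS S (ntyp (X 0) (X 1)) (tc i) a (V' 2))" for v' V'
    unfolding ex_less3 using R[of 0] R[of 1] R[of 2] by simp
  have U3: "sat E v V (fUniq 0) \<and> sat E v V (fUniq 1) \<and> sat E v V (fUniq 2) \<longleftrightarrow> (\<forall>i<3. \<forall>Y. Y \<subseteq> univ E \<longrightarrow> (\<forall>a\<in>univ E. \<forall>b\<in>univ E.
     a \<in> X (i+2) \<and> b \<in> X (i+2) \<and> NrelS S (ntyp (X 0) (X 1)) (tc i) a Y \<and> NrelS S (ntyp (X 0) (X 1)) (tc i) b Y \<longrightarrow> a = b))"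
    unfolding all_less3 using U[of 0] U[of 1] U[of 2] by simp
  have F1: "sat E v V (fAllS 2 (fImp (Conj (fInS 2) (ExFO 2 (Conj (Mem 2 2) (fNS 2 2))))
      (fOr (fRep 0) (fOr (fRep 1) (fRep 2))))) \<longleftrightarrow>
    (\<forall>Y. Y \<subseteq> univ E \<longrightarrow> Y \<in> S \<and> (\<exists>a\<in>univ E. a \<in> Y \<and> (\<exists>b\<in>univ E. b \<in> Y \<and> b \<noteq> a)) \<longrightarrow>
       (\<exists>i<3. \<exists>a\<in>univ E. a \<in> X (i+2) \<and> NrelS S (ntyp (X 0) (X 1)) (tc i) a Y))"
    using R3 sat_fInS[OF so] by simp
  show ?thesis unfolding fFilter_def sat.simps(7) F1 U3 ..
qed

end

lemma struct_eqI:
  fixes r r' :: "'e struct"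
  shows "univ r = univ r' \<Longrightarrow> voc r = voc r' \<Longrightarrow> rels r = rels r' \<Longrightarrow> sets r = sets r' \<Longrightarrow> r = r'"
  by (cases r, cases r') simp

locale lamctx = tnames \<Sigma> sl col cp
  for \<Sigma> sl col cp +
  fixes U :: "'e set" and S :: "'e set set" and A :: "'e struct" and X :: "nat \<Rightarrow> 'e set" and f :: "'e \<times> nat \<Rightarrow> 'e"
  assumes L: "laminar U S" and A: "is_structure \<Sigma> A" and sub: "substruct (set_system_struct U S) A"
    and Xs: "\<And>j. j < 5 \<Longrightarrow> X j \<subseteq> univ A" and cf: "copyok 3 f (univ A)"
begin

abbreviation "T \<equiv> ntyp (X 0) (X 1)"
abbreviation "W \<equiv> Wset X f A"

definition kept :: "'e set" where
  "kept = {f (a, i) | a i. i < 3 \<and> a \<in> univ A \<and> a \<in> X (i+2) \<and> (\<exists>Y. NrelS S T (tc i) a Y)}"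

lemma UA: "U \<subseteq> univ A"
  using sub unfolding substruct_def set_system_struct_def by simp

lemma SA: "sets A SET = {[Y] | Y. Y \<in> S}"
proof -
  have "SET \<in> voc (set_system_struct U S)" by (simp add: set_system_struct_def)
  then have "sets (set_system_struct U S) SET = sets A SET" using sub unfolding substruct_def by blast
  then show ?thesis by (simp add: set_system_struct_def)
qed

lemma SU: "Y \<in> S \<Longrightarrow> Y \<subseteq> U" using lam_sub[OF L] by blast

lemma finj: "a \<in> univ A \<Longrightarrow> b \<in> univ A \<Longrightarrow> i < 3 \<Longrightarrow> j < 3 \<Longrightarrow> f (a, i) = f (b, j) \<longleftrightarrow> a = b \<and> i = j"
  using cf unfolding copyok_def inj_on_def by blast

lemma fout: "a \<in> univ A \<Longrightarrow> i < 3 \<Longrightarrow> f (a, i) \<notin> univ A"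
  using cf unfolding copyok_def by blast

lemma setok_gen: "sets E SET = {[Y] | Y. Y \<in> S} \<Longrightarrow> univ A \<subseteq> univ E \<Longrightarrow> setok E S"
proof -
  assume a: "sets E SET = {[Y] | Y. Y \<in> S}" "univ A \<subseteq> univ E"
  have "\<forall>Y\<in>S. Y \<subseteq> univ E"
  proof
    fix Y assume "Y \<in> S" then have "Y \<subseteq> U" by (rule SU)
    then show "Y \<subseteq> univ E" using UA a(2) by blast
  qed
  moreover have "\<forall>Y. [Y] \<in> sets E SET \<longleftrightarrow> Y \<in> S" using a(1) by auto
  ultimately show ?thesis unfolding setok_def by blast
qed

lemma setok5: "setok (col5 col X A) S"
proof (rule setok_gen)
  show "sets (col5 col X A) SET = {[Y] |Y. Y \<in> S}" using SA col5_fields(2)[of col X A] by simp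
  show "univ A \<subseteq> univ (col5 col X A)" using col5_fields(1)[of col X A] by simp
qed
lemma setokC: "setok (CC X f A) S"
proof (rule setok_gen)
  show "sets (CC X f A) SET = {[Y] |Y. Y \<in> S}" using SA CC_sets[of X f A] by simp
  show "univ A \<subseteq> univ (CC X f A)" using CC_univ[of X f A] by simp
qed

lemma Wo: "univ A \<subseteq> W" using W_orig[OF cf] .

lemma setokD: "setok (DD X f A) S"
proof (rule setok_gen)
  show "univ A \<subseteq> univ (DD X f A)" using Wo DD_fields(1)[of X f A] by simp
  have "\<forall>Y\<in>S. Y \<subseteq> W" using SU UA Wo by blast
  then show "sets (DD X f A) SET = {[Y] |Y. Y \<in> S}" using DD_fields(3)[of X f A SET] SA by auto
qed

lemma colok5: "j < 5 \<Longrightarrow> colok (col5 col X A) col j (X j)" using col5_colok .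
lemma colokC: "j < 5 \<Longrightarrow> colok (CC X f A) col j (X j)" using CC_colok .
lemma colokD: "j < 5 \<Longrightarrow> colok (DD X f A) col j (X j)"
  using colokC[of j] DD_fields(2)[of X f A "RelSym (col j) 1"] Xs[of j] Wo unfolding colok_def by auto

lemma CC_isc: "sat (CC X f A) v V (fIsCopy x) \<longleftrightarrow> (\<exists>y\<in>univ (CC X f A). \<exists>i<3. y \<in> univ A \<and> v x = f (y, i))"
  if "x \<noteq> 2" for v V x
  by (rule sat_fIsCopy[where P="\<lambda>i a b. a \<in> univ A \<and> b = f (a, i)", OF that]) (simp add: CC_P)

lemma CC_kn: "sat (CC X f A) v V (fKN i x Xv) \<longleftrightarrow>
   (\<exists>y\<in>univ (CC X f A). (y \<in> univ A \<and> v x = f (y, i)) \<and> y \<in> X (i+2) \<and> NrelS S T (tc i) y (V Xv))"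
  if "x \<noteq> 2" "Xv \<noteq> 7" "Xv \<noteq> 8" "i < 3" for v V x Xv i
proof -
  have c: "colok (CC X f A) col 0 (X 0)" "colok (CC X f A) col 1 (X 1)" "colok (CC X f A) col (i+2) (X (i+2))"
    using colokC that(4) by auto
  show ?thesis
    by (rule sat_fKN[where P="\<lambda>a b. a \<in> univ A \<and> b = f (a, i)", OF that _ setokC c])
       (simp add: CC_P[OF that(4)])
qed

lemma W_eq: "W = univ A \<union> kept"
proof -
  let ?C = "CC X f A"
  have R: "sat ?C (\<lambda>_. x) (\<lambda>_. {}) fRestr \<longleftrightarrow> \<not> sat ?C (\<lambda>_. x) (\<lambda>_. {}) (fIsCopy 0) \<or>
     (\<exists>i<3. sat ?C (\<lambda>_. x) (\<lambda>_. {}) (ExSO 2 (fKN i 0 2)))" for x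
    unfolding fRestr_def ex_less3 by simp
  have K: "sat ?C (\<lambda>_. x) (\<lambda>_. {}) (ExSO 2 (fKN i 0 2)) \<longleftrightarrow>
     (\<exists>Y. Y \<subseteq> univ ?C \<and> (\<exists>y\<in>univ ?C. (y \<in> univ A \<and> x = f (y, i)) \<and> y \<in> X (i+2) \<and> NrelS S T (tc i) y Y))"
    if "i < 3" for x i
  proof -
    have "sat ?C (\<lambda>_. x) ((\<lambda>_. {})(2 := Y)) (fKN i 0 2) \<longleftrightarrow>
       (\<exists>y\<in>univ ?C. (y \<in> univ A \<and> x = f (y, i)) \<and> y \<in> X (i+2) \<and> NrelS S T (tc i) y Y)" for Y
      using CC_kn[of 0 2 i "\<lambda>_. x" "(\<lambda>_. {})(2 := Y)"] that by simp
    then show ?thesis by simp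
  qed
  have I: "sat ?C (\<lambda>_. x) (\<lambda>_. {}) (fIsCopy 0) \<longleftrightarrow> (\<exists>y\<in>univ ?C. \<exists>i<3. y \<in> univ A \<and> x = f (y, i))" for x
    using CC_isc[of 0 "\<lambda>_. x" "\<lambda>_. {}"] by simp
  have UC: "univ ?C = univ A \<union> f ` (univ A \<times> {..<3})" using CC_univ[of X f A] .
  show ?thesis
  proof (intro equalityI subsetI)
    fix x assume x: "x \<in> W"
    then have xC: "x \<in> univ ?C" and s: "sat ?C (\<lambda>_. x) (\<lambda>_. {}) fRestr" unfolding Wset_def by auto
    show "x \<in> univ A \<union> kept"
    proof (cases "x \<in> univ A")
      case False
      then obtain y0 i0 where y0: "y0 \<in> univ A" "i0 < 3" "x = f (y0, i0)" using xC UC by auto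
      have "y0 \<in> univ ?C" using y0 UC by auto
      then have "sat ?C (\<lambda>_. x) (\<lambda>_. {}) (fIsCopy 0)" unfolding I using y0 by blast
      then obtain i where i: "i < 3" and "sat ?C (\<lambda>_. x) (\<lambda>_. {}) (ExSO 2 (fKN i 0 2))"
        using s unfolding R by blast
      then obtain Y y where "y \<in> univ A" "x = f (y, i)" "y \<in> X (i+2)" "NrelS S T (tc i) y Y"
        unfolding K[OF i] by blast
      then show ?thesis unfolding kept_def using i by blast
    qed simp
  next
    fix x assume "x \<in> univ A \<union> kept"
    then show "x \<in> W"
    proof
      assume "x \<in> univ A" then show ?thesis using Wo by auto
    next
      assume "x \<in> kept"
      then obtain a i Y where a: "x = f (a, i)" "i < 3" "a \<in> univ A" "a \<in> X (i+2)" "NrelS S T (tc i) a Y"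
        unfolding kept_def by blast
      have xC: "x \<in> univ ?C" using a UC by auto
      have "Y \<in> S" using a(5) unfolding NrelS_def by blast
      then have YC: "Y \<subseteq> univ ?C" using SU[of Y] UA UC by blast
      have aC: "a \<in> univ ?C" using a(3) UC by auto
      have "sat ?C (\<lambda>_. x) (\<lambda>_. {}) (ExSO 2 (fKN i 0 2))"
        unfolding K[OF a(2)] using a YC aC by blast
      then have "sat ?C (\<lambda>_. x) (\<lambda>_. {}) fRestr" unfolding R using a(2) by blast
      then show ?thesis unfolding Wset_def using xC by auto
    qed
  qed
qed

lemma kept_out: "x \<in> kept \<Longrightarrow> x \<notin> univ A"
  unfolding kept_def using fout by blast

definition nd :: "'e \<Rightarrow> 'e set" where
  "nd u = (if u \<in> univ A then {u} else (THE Y. \<exists>i<3. \<exists>a\<in>univ A. u = f (a, i) \<and> NrelS S T (tc i) a Y))"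

lemma nd_kept: assumes "i < 3" "a \<in> univ A" "NrelS S T (tc i) a Y" shows "nd (f (a, i)) = Y"
proof -
  have "f (a, i) \<notin> univ A" using fout assms by auto
  moreover have "(THE Y. \<exists>j<3. \<exists>b\<in>univ A. f (a, i) = f (b, j) \<and> NrelS S T (tc j) b Y) = Y"
  proof (rule the_equality)
    show "\<exists>j<3. \<exists>b\<in>univ A. f (a, i) = f (b, j) \<and> NrelS S T (tc j) b Y" using assms by blast
    fix Y' assume "\<exists>j<3. \<exists>b\<in>univ A. f (a, i) = f (b, j) \<and> NrelS S T (tc j) b Y'"
    then obtain j b where "j < 3" "b \<in> univ A" "f (a, i) = f (b, j)" "NrelS S T (tc j) b Y'" by blast
    then have "NrelS S T (tc i) a Y'" using finj assms by auto
    then show "Y' = Y" using NrelS_fun[OF L _ assms(3)] by blast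
  qed
  ultimately show ?thesis unfolding nd_def by simp
qed

lemma nd_S: "u \<in> U \<union> kept \<Longrightarrow> nd u \<in> S"
proof -
  assume "u \<in> U \<union> kept"
  then show "nd u \<in> S"
  proof
    assume "u \<in> U" then show ?thesis unfolding nd_def using UA lam_single[OF L] by auto
  next
    assume "u \<in> kept"
    then obtain a i Y where a: "u = f (a, i)" "i < 3" "a \<in> univ A" "NrelS S T (tc i) a Y"
      unfolding kept_def by blast
    have "Y \<in> S" using a(4) unfolding NrelS_def by blast
    then show ?thesis using nd_kept[OF a(2,3,4)] a(1) by simp
  qed
qed

lemma DD_P: "i < 3 \<Longrightarrow> [a, b] \<in> rels (DD X f A) (RelSym (cp i) 2) \<longleftrightarrow> a \<in> univ A \<and> b = f (a, i) \<and> b \<in> W"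
  using DD_fields(2)[of X f A "RelSym (cp i) 2"] CC_P[of i a b X f A] Wo by auto

lemma DD_isc: "sat (DD X f A) v V (fIsCopy x) \<longleftrightarrow> (\<exists>y\<in>W. \<exists>i<3. y \<in> univ A \<and> v x = f (y, i) \<and> v x \<in> W)"
  if "x \<noteq> 2" for v V x
  using sat_fIsCopy[where P="\<lambda>i a b. a \<in> univ A \<and> b = f (a, i) \<and> b \<in> W", OF that, of "DD X f A" v V]
    DD_P DD_fields(1)[of X f A] by simp

lemma DD_kn: "sat (DD X f A) v V (fKN i x Xv) \<longleftrightarrow>
   (\<exists>y\<in>W. (y \<in> univ A \<and> v x = f (y, i) \<and> v x \<in> W) \<and> y \<in> X (i+2) \<and> NrelS S T (tc i) y (V Xv))"
  if "x \<noteq> 2" "Xv \<noteq> 7" "Xv \<noteq> 8" "i < 3" for v V x Xv i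
proof -
  have c: "colok (DD X f A) col 0 (X 0)" "colok (DD X f A) col 1 (X 1)" "colok (DD X f A) col (i+2) (X (i+2))"
    using colokD that(4) by auto
  show ?thesis
    using sat_fKN[where P="\<lambda>a b. a \<in> univ A \<and> b = f (a, i) \<and> b \<in> W", OF that _ setokD c, of v V]
      DD_P[OF that(4)] DD_fields(1)[of X f A] that by simp
qed

lemma sat_fNode:
  assumes x: "x \<noteq> 2" "x \<noteq> 9" and Xv: "Xv \<noteq> 7" "Xv \<noteq> 8" and u: "v x \<in> W" and Y: "V Xv \<subseteq> W"
  shows "sat (DD X f A) v V (fNode x Xv) \<longleftrightarrow> v x \<in> U \<union> kept \<and> V Xv = nd (v x)"
proof -
  have kn: "(\<exists>i<3. sat (DD X f A) v V (fKN i x Xv)) \<longleftrightarrow>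
     (\<exists>i<3. \<exists>y\<in>W. (y \<in> univ A \<and> v x = f (y, i) \<and> v x \<in> W) \<and> y \<in> X (i+2) \<and> NrelS S T (tc i) y (V Xv))"
  proof -
    have e: "\<And>i. i < 3 \<Longrightarrow> sat (DD X f A) v V (fKN i x Xv) \<longleftrightarrow>
      (\<exists>y\<in>W. (y \<in> univ A \<and> v x = f (y, i) \<and> v x \<in> W) \<and> y \<in> X (i+2) \<and> NrelS S T (tc i) y (V Xv))"
      using DD_kn[OF x(1) Xv] by blast
    show ?thesis
    proof
      assume "\<exists>i<3. sat (DD X f A) v V (fKN i x Xv)"
      then obtain i where "i < 3" "sat (DD X f A) v V (fKN i x Xv)" by blast
      then show "\<exists>i<3. \<exists>y\<in>W. (y \<in> univ A \<and> v x = f (y, i) \<and> v x \<in> W) \<and> y \<in> X (i+2) \<and> NrelS S T (tc i) y (V Xv)"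
        using e by blast
    next
      assume "\<exists>i<3. \<exists>y\<in>W. (y \<in> univ A \<and> v x = f (y, i) \<and> v x \<in> W) \<and> y \<in> X (i+2) \<and> NrelS S T (tc i) y (V Xv)"
      then obtain i where "i < 3" "\<exists>y\<in>W. (y \<in> univ A \<and> v x = f (y, i) \<and> v x \<in> W) \<and> y \<in> X (i+2) \<and> NrelS S T (tc i) y (V Xv)" by blast
      then show "\<exists>i<3. sat (DD X f A) v V (fKN i x Xv)" using e by blast
    qed
  qed
  have e: "sat (DD X f A) v V (fNode x Xv) \<longleftrightarrow>
     (\<not> (\<exists>y\<in>W. \<exists>i<3. y \<in> univ A \<and> v x = f (y, i) \<and> v x \<in> W) \<and> V Xv \<in> S \<and> (\<forall>b\<in>W. b \<in> V Xv \<longleftrightarrow> b = v x)) \<or>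
     (\<exists>i<3. \<exists>y\<in>W. (y \<in> univ A \<and> v x = f (y, i) \<and> v x \<in> W) \<and> y \<in> X (i+2) \<and> NrelS S T (tc i) y (V Xv))"
  proof -
    have n1: "sat (DD X f A) v V (fNode x Xv) \<longleftrightarrow> sat (DD X f A) v V (Conj (Neg (fIsCopy x)) (Conj (fInS Xv) (fSingle x Xv))) \<or>
       (\<exists>i<3. sat (DD X f A) v V (fKN i x Xv))"
      unfolding fNode_def ex_less3 by simp
    have n2: "sat (DD X f A) v V (Conj (Neg (fIsCopy x)) (Conj (fInS Xv) (fSingle x Xv))) \<longleftrightarrow>
      (\<not> (\<exists>y\<in>W. \<exists>i<3. y \<in> univ A \<and> v x = f (y, i) \<and> v x \<in> W) \<and> V Xv \<in> S \<and> (\<forall>b\<in>W. b \<in> V Xv \<longleftrightarrow> b = v x))"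
      using DD_isc[OF x(1)] sat_fInS[OF setokD] x(2) DD_fields(1)[of X f A] by simp
    show ?thesis using n1 n2 kn by blast
  qed
  show ?thesis
  proof (cases "v x \<in> univ A")
    case True
    have nc: "\<not> (\<exists>y\<in>W. \<exists>i<3. y \<in> univ A \<and> v x = f (y, i) \<and> v x \<in> W)"
    proof
      assume "\<exists>y\<in>W. \<exists>i<3. y \<in> univ A \<and> v x = f (y, i) \<and> v x \<in> W"
      then obtain y i where "i < 3" "y \<in> univ A" "v x = f (y, i)" by blast
      then show False using fout[of y i] True by simp
    qed
    have nK: "\<not> (\<exists>i<3. \<exists>y\<in>W. (y \<in> univ A \<and> v x = f (y, i) \<and> v x \<in> W) \<and> y \<in> X (i+2) \<and> NrelS S T (tc i) y (V Xv))"
    proof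
      assume "\<exists>i<3. \<exists>y\<in>W. (y \<in> univ A \<and> v x = f (y, i) \<and> v x \<in> W) \<and> y \<in> X (i+2) \<and> NrelS S T (tc i) y (V Xv)"
      then obtain y i where "i < 3" "y \<in> univ A" "v x = f (y, i)" by blast
      then show False using fout[of y i] True by simp
    qed
    have nk: "v x \<notin> kept" using kept_out True by blast
    have ndx: "nd (v x) = {v x}" using True unfolding nd_def by simp
    have P: "(V Xv \<in> S \<and> (\<forall>b\<in>W. b \<in> V Xv \<longleftrightarrow> b = v x)) \<longleftrightarrow> v x \<in> U \<and> V Xv = {v x}"
    proof
      assume h: "V Xv \<in> S \<and> (\<forall>b\<in>W. b \<in> V Xv \<longleftrightarrow> b = v x)"
      then have "V Xv = {v x}" using Y u by blast
      then show "v x \<in> U \<and> V Xv = {v x}" using h SU[of "V Xv"] by simp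
    next
      assume h: "v x \<in> U \<and> V Xv = {v x}"
      then have "V Xv \<in> S" using lam_single[OF L] by simp
      then show "V Xv \<in> S \<and> (\<forall>b\<in>W. b \<in> V Xv \<longleftrightarrow> b = v x)" using h by simp
    qed
    have "sat (DD X f A) v V (fNode x Xv) \<longleftrightarrow> (V Xv \<in> S \<and> (\<forall>b\<in>W. b \<in> V Xv \<longleftrightarrow> b = v x))"
      using e nc nK by blast
    also have "\<dots> \<longleftrightarrow> v x \<in> U \<and> V Xv = {v x}" using P .
    also have "\<dots> \<longleftrightarrow> v x \<in> U \<union> kept \<and> V Xv = nd (v x)" using nk ndx by simp
    finally show ?thesis .
  next
    case False
    then have uk: "v x \<in> kept" using u W_eq by simp
    then obtain a i Y0 where a: "v x = f (a, i)" "i < 3" "a \<in> univ A" "a \<in> X (i+2)" "NrelS S T (tc i) a Y0"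
      unfolding kept_def by blast
    have c: "\<exists>y\<in>W. \<exists>i<3. y \<in> univ A \<and> v x = f (y, i) \<and> v x \<in> W"
    proof -
      have "a \<in> W" using a(3) Wo by blast
      then show ?thesis using a(1,2,3) u by blast
    qed
    have K: "(\<exists>j<3. \<exists>y\<in>W. (y \<in> univ A \<and> v x = f (y, j) \<and> v x \<in> W) \<and> y \<in> X (j+2) \<and> NrelS S T (tc j) y (V Xv))
      \<longleftrightarrow> NrelS S T (tc i) a (V Xv)"
    proof
      assume "\<exists>j<3. \<exists>y\<in>W. (y \<in> univ A \<and> v x = f (y, j) \<and> v x \<in> W) \<and> y \<in> X (j+2) \<and> NrelS S T (tc j) y (V Xv)"
      then obtain j y where j: "j < 3" "y \<in> univ A" "v x = f (y, j)" "NrelS S T (tc j) y (V Xv)"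
        by blast
      then have "f (a, i) = f (y, j)" using a(1) by simp
      then have "y = a \<and> j = i" using finj[OF a(3) j(2) a(2) j(1)] by simp
      then show "NrelS S T (tc i) a (V Xv)" using j(4) by simp
    next
      assume n: "NrelS S T (tc i) a (V Xv)"
      have "a \<in> W" using a(3) Wo by blast
      then show "\<exists>j<3. \<exists>y\<in>W. (y \<in> univ A \<and> v x = f (y, j) \<and> v x \<in> W) \<and> y \<in> X (j+2) \<and> NrelS S T (tc j) y (V Xv)"
        using a(1-4) u n by blast
    qed
    have K2: "NrelS S T (tc i) a (V Xv) \<longleftrightarrow> V Xv = nd (v x)"
    proof
      assume "NrelS S T (tc i) a (V Xv)"
      then show "V Xv = nd (v x)" using nd_kept[OF a(2,3)] a(1) by simp
    next
      assume "V Xv = nd (v x)"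
      then show "NrelS S T (tc i) a (V Xv)" using nd_kept[OF a(2,3,5)] a(1,5) by simp
    qed
    have "sat (DD X f A) v V (fNode x Xv) \<longleftrightarrow> NrelS S T (tc i) a (V Xv)"
      using e c K by blast
    then show ?thesis using K2 uk by blast
  qed
qed

lemma AncR_eq: "AncR X f A = {[u, w] | u w. u \<in> U \<union> kept \<and> w \<in> U \<union> kept \<and> nd w \<subseteq> nd u}"
proof (intro equalityI subsetI)
  have ndW: "u \<in> U \<union> kept \<Longrightarrow> nd u \<subseteq> W" for u using nd_S SU UA Wo by blast
  fix xs assume xs: "xs \<in> AncR X f A"
  then have l: "length xs = 2" and sx: "set xs \<subseteq> W" and s: "sat (DD X f A) (\<lambda>i. xs ! i) (\<lambda>_. {}) fAnc"
    unfolding AncR_def by auto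
  obtain u w where uw: "xs = [u, w]" using l by (metis length_0_conv length_Suc_conv numeral_2_eq_2)
  have uwW: "u \<in> W" "w \<in> W" using sx uw by auto
  from s obtain Y0 Y1 where Y: "Y0 \<subseteq> W" "Y1 \<subseteq> W"
    and n0: "sat (DD X f A) (\<lambda>i. xs ! i) ((\<lambda>_. {})(0 := Y0, 1 := Y1)) (fNode 0 0)"
    and n1: "sat (DD X f A) (\<lambda>i. xs ! i) ((\<lambda>_. {})(0 := Y0, 1 := Y1)) (fNode 1 1)"
    and sb: "\<forall>b\<in>W. b \<in> Y1 \<longrightarrow> b \<in> Y0"
    unfolding fAnc_def using DD_fields(1)[of X f A] by auto
  have "u \<in> U \<union> kept \<and> Y0 = nd u"
    using n0 sat_fNode[of 0 0 "\<lambda>i. xs ! i" "(\<lambda>_. {})(0 := Y0, 1 := Y1)"] uw uwW Y by simp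
  moreover have "w \<in> U \<union> kept \<and> Y1 = nd w"
    using n1 sat_fNode[of 1 1 "\<lambda>i. xs ! i" "(\<lambda>_. {})(0 := Y0, 1 := Y1)"] uw uwW Y by simp
  ultimately show "xs \<in> {[u, w] | u w. u \<in> U \<union> kept \<and> w \<in> U \<union> kept \<and> nd w \<subseteq> nd u}"
    using uw sb Y by blast
next
  have ndW: "u \<in> U \<union> kept \<Longrightarrow> nd u \<subseteq> W" for u using nd_S SU UA Wo by blast
  fix xs assume "xs \<in> {[u, w] | u w. u \<in> U \<union> kept \<and> w \<in> U \<union> kept \<and> nd w \<subseteq> nd u}"
  then obtain u w where uw: "xs = [u, w]" "u \<in> U \<union> kept" "w \<in> U \<union> kept" "nd w \<subseteq> nd u" by blast
  have uwW: "u \<in> W" "w \<in> W" using uw W_eq UA by auto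
  let ?V = "(\<lambda>_. {})(0 := nd u, 1 := nd w)"
  have n0: "sat (DD X f A) (\<lambda>i. xs ! i) ?V (fNode 0 0)"
    using sat_fNode[of 0 0 "\<lambda>i. xs ! i" ?V] uw uwW ndW by simp
  have n1: "sat (DD X f A) (\<lambda>i. xs ! i) ?V (fNode 1 1)"
    using sat_fNode[of 1 1 "\<lambda>i. xs ! i" ?V] uw uwW ndW by simp
  have sb: "sat (DD X f A) (\<lambda>i. xs ! i) ?V (fSub 1 0)" using uw(4) by auto
  have "sat (DD X f A) (\<lambda>i. xs ! i) (\<lambda>_. {}) fAnc"
    unfolding fAnc_def sat.simps
  proof (rule exI[where x="nd u"], intro conjI)
    show "nd u \<subseteq> univ (DD X f A)" using ndW[OF uw(2)] DD_fields(1)[of X f A] by simp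
    show "\<exists>Y. Y \<subseteq> univ (DD X f A) \<and> sat (DD X f A) (\<lambda>i. xs ! i) (((\<lambda>_. {})(0 := nd u))(1 := Y)) (fNode 0 0) \<and>
         sat (DD X f A) (\<lambda>i. xs ! i) (((\<lambda>_. {})(0 := nd u))(1 := Y)) (fNode 1 1) \<and>
         sat (DD X f A) (\<lambda>i. xs ! i) (((\<lambda>_. {})(0 := nd u))(1 := Y)) (fSub 1 0)"
    proof (rule exI[where x="nd w"], intro conjI)
      show "nd w \<subseteq> univ (DD X f A)" using ndW[OF uw(3)] DD_fields(1)[of X f A] by simp
    qed (use n0 n1 sb in simp_all)
  qed
  then show "xs \<in> AncR X f A" unfolding AncR_def using uw uwW by auto
qed

end

context lamctx
begin

definition FiltOK :: bool where
  "FiltOK \<longleftrightarrow> (\<forall>Y. internal S Y \<longrightarrow> (\<exists>i<3. \<exists>a. a \<in> X (i+2) \<and> NrelS S T (tc i) a Y)) \<and>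
     (\<forall>i<3. \<forall>a b Y. a \<in> X (i+2) \<and> b \<in> X (i+2) \<and> NrelS S T (tc i) a Y \<and> NrelS S T (tc i) b Y \<longrightarrow> a = b)"

lemma NrelS_basic: "NrelS S T' t a Y \<Longrightarrow> Y \<in> S \<and> a \<in> Y \<and> Y \<noteq> {a} \<and> T' Y = t"
  unfolding NrelS_def by blast

lemma internal_iff: "Y \<subseteq> univ A \<Longrightarrow> internal S Y \<longleftrightarrow> Y \<in> S \<and> (\<exists>a\<in>univ A. a \<in> Y \<and> (\<exists>b\<in>univ A. b \<in> Y \<and> b \<noteq> a))"
proof -
  assume YA: "Y \<subseteq> univ A"
  show ?thesis
  proof
    assume I: "internal S Y"
    then have Y: "Y \<in> S" "\<forall>a. Y \<noteq> {a}" unfolding internal_def by auto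
    then obtain a where a: "a \<in> Y" using lam_ne[OF L] by blast
    then obtain b where "b \<in> Y" "b \<noteq> a" using Y(2) by blast
    then show "Y \<in> S \<and> (\<exists>a\<in>univ A. a \<in> Y \<and> (\<exists>b\<in>univ A. b \<in> Y \<and> b \<noteq> a))" using a Y YA by blast
  next
    assume "Y \<in> S \<and> (\<exists>a\<in>univ A. a \<in> Y \<and> (\<exists>b\<in>univ A. b \<in> Y \<and> b \<noteq> a))"
    then show "internal S Y" unfolding internal_def by blast
  qed
qed

lemma filter_sem: "sat (col5 col X A) v V fFilter \<longleftrightarrow> FiltOK"
proof -
  have c: "\<And>j. j < 5 \<Longrightarrow> colok (col5 col X A) col j (X j)" using colok5 .
  have u5: "univ (col5 col X A) = univ A" by (simp add: col5_fields)
  have SA': "\<And>Y. Y \<in> S \<Longrightarrow> Y \<subseteq> univ A" using SU UA by blast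
  define P1 where "P1 \<longleftrightarrow> (\<forall>Y. Y \<subseteq> univ A \<longrightarrow> Y \<in> S \<and> (\<exists>a\<in>univ A. a \<in> Y \<and> (\<exists>b\<in>univ A. b \<in> Y \<and> b \<noteq> a)) \<longrightarrow>
       (\<exists>i<3. \<exists>a\<in>univ A. a \<in> X (i+2) \<and> NrelS S T (tc i) a Y))"
  define P2 where "P2 \<longleftrightarrow> (\<forall>i<3. \<forall>Y. Y \<subseteq> univ A \<longrightarrow> (\<forall>a\<in>univ A. \<forall>b\<in>univ A.
     a \<in> X (i+2) \<and> b \<in> X (i+2) \<and> NrelS S T (tc i) a Y \<and> NrelS S T (tc i) b Y \<longrightarrow> a = b))"
  have e: "sat (col5 col X A) v V fFilter \<longleftrightarrow> P1 \<and> P2"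
    using sat_fFilter[OF setok5 c, of v V] unfolding u5 P1_def P2_def .
  have "P1 \<and> P2 \<longleftrightarrow> FiltOK"
  proof
    assume "P1 \<and> P2"
    then have h1: P1 and h2: P2 by auto
    have p1: "\<forall>Y. internal S Y \<longrightarrow> (\<exists>i<3. \<exists>a. a \<in> X (i+2) \<and> NrelS S T (tc i) a Y)"
    proof (intro allI impI)
      fix Y assume I: "internal S Y"
      then have YA: "Y \<subseteq> univ A" using SA' unfolding internal_def by blast
      have cY: "Y \<in> S \<and> (\<exists>a\<in>univ A. a \<in> Y \<and> (\<exists>b\<in>univ A. b \<in> Y \<and> b \<noteq> a))"
        using internal_iff[OF YA] I by simp
      have "\<exists>i<3. \<exists>a\<in>univ A. a \<in> X (i+2) \<and> NrelS S T (tc i) a Y"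
        using h1 YA cY unfolding P1_def by simp
      then show "\<exists>i<3. \<exists>a. a \<in> X (i+2) \<and> NrelS S T (tc i) a Y" by blast
    qed
    have p2: "\<forall>i<3. \<forall>a b Y. a \<in> X (i+2) \<and> b \<in> X (i+2) \<and> NrelS S T (tc i) a Y \<and> NrelS S T (tc i) b Y \<longrightarrow> a = b"
    proof (intro allI impI)
      fix i a b Y assume i: "i < 3" and h: "a \<in> X (i+2) \<and> b \<in> X (i+2) \<and> NrelS S T (tc i) a Y \<and> NrelS S T (tc i) b Y"
      then have "Y \<in> S" "a \<in> Y" "b \<in> Y" using NrelS_basic by blast+
      then have YA: "Y \<subseteq> univ A" and aA: "a \<in> univ A" and bA: "b \<in> univ A" using SA' by blast+
      have "\<forall>a\<in>univ A. \<forall>b\<in>univ A. a \<in> X (i+2) \<and> b \<in> X (i+2) \<and> NrelS S T (tc i) a Y \<and> NrelS S T (tc i) b Y \<longrightarrow> a = b"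
        using h2 i YA unfolding P2_def by simp
      then show "a = b" using aA bA h by blast
    qed
    show FiltOK unfolding FiltOK_def using p1 p2 by blast
  next
    assume F: FiltOK
    have F1: "\<forall>Y. internal S Y \<longrightarrow> (\<exists>i<3. \<exists>a. a \<in> X (i+2) \<and> NrelS S T (tc i) a Y)"
      and F2: "\<forall>i<3. \<forall>a b Y. a \<in> X (i+2) \<and> b \<in> X (i+2) \<and> NrelS S T (tc i) a Y \<and> NrelS S T (tc i) b Y \<longrightarrow> a = b"
      using F unfolding FiltOK_def by auto
    have P1 unfolding P1_def
    proof (intro allI impI)
      fix Y assume YA: "Y \<subseteq> univ A" and h: "Y \<in> S \<and> (\<exists>a\<in>univ A. a \<in> Y \<and> (\<exists>b\<in>univ A. b \<in> Y \<and> b \<noteq> a))"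
      then have "internal S Y" using internal_iff[OF YA] by simp
      then obtain i a where i: "i < 3" "a \<in> X (i+2)" "NrelS S T (tc i) a Y" using F1 by blast
      then have "a \<in> Y" using NrelS_basic by blast
      then have "a \<in> univ A" using YA by blast
      then show "\<exists>i<3. \<exists>a\<in>univ A. a \<in> X (i+2) \<and> NrelS S T (tc i) a Y" using i by blast
    qed
    moreover have P2 unfolding P2_def using F2 by blast
    ultimately show "P1 \<and> P2" by blast
  qed
  then show ?thesis using e by simp
qed

definition Tr :: "'e struct" where
  "Tr = \<lparr> univ = U \<union> kept, voc = {ancestor},
     rels = (\<lambda>Q. if Q = ancestor then {[u, v] | u v. u \<in> U \<union> kept \<and> v \<in> U \<union> kept \<and> lam_ancestor S (nd u) (nd v)} else {}),
     sets = (\<lambda>_. {}) \<rparr>"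

lemma nd_U: "a \<in> U \<Longrightarrow> nd a = {a}" unfolding nd_def using UA by auto

lemma bij_nd:
  assumes F: FiltOK
  shows "bij_betw nd (U \<union> kept) S"
proof -
  have uniq: "\<And>i a b Y. i < 3 \<Longrightarrow> a \<in> X (i+2) \<Longrightarrow> b \<in> X (i+2) \<Longrightarrow> NrelS S T (tc i) a Y \<Longrightarrow> NrelS S T (tc i) b Y \<Longrightarrow> a = b"
    using F unfolding FiltOK_def by blast
  have inj: "inj_on nd (U \<union> kept)"
  proof (rule inj_onI)
    fix u u' assume u: "u \<in> U \<union> kept" and u': "u' \<in> U \<union> kept" and eq: "nd u = nd u'"
    have kc: "\<exists>a i. u = f (a, i) \<and> i < 3 \<and> a \<in> univ A \<and> a \<in> X (i+2) \<and> NrelS S T (tc i) a (nd u)" if "u \<in> kept" for u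
    proof -
      obtain a i Y where a: "u = f (a, i)" "i < 3" "a \<in> univ A" "a \<in> X (i+2)" "NrelS S T (tc i) a Y"
        using \<open>u \<in> kept\<close> unfolding kept_def by blast
      then have "nd u = Y" using nd_kept by simp
      then show ?thesis using a by blast
    qed
    have ns: "\<And>a i Y u. NrelS S T (tc i) a Y \<Longrightarrow> Y \<noteq> {u}"
    proof
      fix a i Y u assume n: "NrelS S T (tc i) a Y" and Yu: "Y = {u}"
      then have "a \<in> Y" "Y \<noteq> {a}" using NrelS_basic by blast+
      then show False using Yu by blast
    qed
    show "u = u'"
    proof (cases "u \<in> U")
      case True
      show ?thesis
      proof (cases "u' \<in> U")
        case True
        then show ?thesis using \<open>u \<in> U\<close> eq nd_U by auto
      next
        case False
        then have "u' \<in> kept" using u' by blast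
        then obtain a i where "NrelS S T (tc i) a (nd u')" using kc by blast
        then show ?thesis using ns[of i a "nd u'" u] eq nd_U[OF \<open>u \<in> U\<close>] by simp
      qed
    next
      case False
      then have uk: "u \<in> kept" using u by blast
      then obtain a i where a: "u = f (a, i)" "i < 3" "a \<in> univ A" "a \<in> X (i+2)" "NrelS S T (tc i) a (nd u)" using kc by blast
      show ?thesis
      proof (cases "u' \<in> U")
        case True
        then show ?thesis using ns[of i a "nd u" u'] eq nd_U[OF True] a(5) by simp
      next
        case False
        then have "u' \<in> kept" using u' by blast
        then obtain b j where b: "u' = f (b, j)" "j < 3" "b \<in> univ A" "b \<in> X (j+2)" "NrelS S T (tc j) b (nd u')" using kc by blast
        have "T (nd u) = tc i" "T (nd u') = tc j" using a(5) b(5) NrelS_basic by blast+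
        then have "i = j" using eq tc_inj[OF a(2) b(2)] by simp
        then have "a = b" using uniq[OF a(2) a(4)] b(4) a(5) b(5) eq by simp
        then show ?thesis using a(1) b(1) \<open>i = j\<close> by simp
      qed
    qed
  qed
  have img: "nd ` (U \<union> kept) = S"
  proof (intro equalityI subsetI)
    fix Y assume "Y \<in> nd ` (U \<union> kept)" then show "Y \<in> S" using nd_S by blast
  next
    fix Y assume Y: "Y \<in> S"
    show "Y \<in> nd ` (U \<union> kept)"
    proof (cases "internal S Y")
      case True
      then obtain i a where i: "i < 3" "a \<in> X (i+2)" "NrelS S T (tc i) a Y" using F unfolding FiltOK_def by blast
      have "a \<in> Y" using i(3) NrelS_basic by blast
      then have aA: "a \<in> univ A" using SU[OF Y] UA by blast
      have "f (a, i) \<in> kept" unfolding kept_def using i aA by blast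
      moreover have "nd (f (a, i)) = Y" using nd_kept[OF i(1) aA i(3)] .
      ultimately show ?thesis by blast
    next
      case False
      then obtain a where a: "Y = {a}" using Y unfolding internal_def by blast
      then have "a \<in> U" using SU[OF Y] by blast
      then show ?thesis using a nd_U by blast
    qed
  qed
  show ?thesis unfolding bij_betw_def using inj img by blast
qed

lemma rep_Tr: assumes F: FiltOK shows "represents_laminar_tree Tr U S"
  unfolding represents_laminar_tree_def
proof (intro conjI exI[of _ nd])
  show "voc Tr = {ancestor}" "U \<subseteq> univ Tr" "sets Tr = (\<lambda>_. {})" unfolding Tr_def by auto
  show "bij_betw nd (univ Tr) S" using bij_nd[OF F] unfolding Tr_def by simp
  show "\<forall>a\<in>U. nd a = {a}" using nd_U by blast
  have uT: "univ Tr = U \<union> kept" unfolding Tr_def by simp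
  show "rels Tr = (\<lambda>Q. if Q = ancestor then {[u, v] |u v. u \<in> univ Tr \<and> v \<in> univ Tr \<and> lam_ancestor S (nd u) (nd v)} else {})"
    unfolding uT unfolding Tr_def by simp
qed

lemma Tr_fields: "univ Tr = U \<union> kept" "voc Tr = {ancestor}" "sets Tr = (\<lambda>_. {})"
  "rels Tr = (\<lambda>Q. if Q = ancestor then {[u, v] | u v. u \<in> U \<union> kept \<and> v \<in> U \<union> kept \<and> lam_ancestor S (nd u) (nd v)} else {})"
  unfolding Tr_def by simp_all

lemma join_eq: "out X f A = join A Tr"
proof (rule struct_eqI)
  have vA: "voc A = \<Sigma>" using A unfolding is_structure_def by auto
  have jv: "voc (join A Tr) = \<Sigma> \<union> {ancestor}" unfolding join_def using vA Tr_fields(2) by simp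
  have ju: "univ (join A Tr) = univ A \<union> (U \<union> kept)" unfolding join_def using Tr_fields(1) by simp
  have jr: "rels (join A Tr) Q = (if Q = ancestor then rels Tr Q else if Q \<in> \<Sigma> then rels A Q else {})" for Q
    unfolding join_def using vA Tr_fields(2) ancn by simp
  have js: "sets (join A Tr) Q = (if Q \<in> \<Sigma> then sets A Q else {})" for Q
    unfolding join_def using vA Tr_fields(2,3) ancn by simp
  show "univ (out X f A) = univ (join A Tr)"
    unfolding ju out_fields(1)[OF A cf, of X] W_eq using UA by blast
  show "voc (out X f A) = voc (join A Tr)"
    unfolding jv out_fields(2)[OF A cf, of X] by blast
  have anc: "AncR X f A = {[u, v] | u v. u \<in> U \<union> kept \<and> v \<in> U \<union> kept \<and> lam_ancestor S (nd u) (nd v)}"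
  proof -
    have "\<And>u v. u \<in> U \<union> kept \<Longrightarrow> v \<in> U \<union> kept \<Longrightarrow> lam_ancestor S (nd u) (nd v) \<longleftrightarrow> nd v \<subseteq> nd u"
      using lam_ancestor_iff[OF L] nd_S by blast
    then show ?thesis unfolding AncR_eq by blast
  qed
  show "rels (out X f A) = rels (join A Tr)"
  proof
    fix Q show "rels (out X f A) Q = rels (join A Tr) Q"
      unfolding jr out_fields(3)[OF A cf, of X Q] using anc Tr_fields(4) by simp
  qed
  show "sets (out X f A) = sets (join A Tr)"
  proof
    fix Q show "sets (out X f A) Q = sets (join A Tr) Q"
      unfolding js out_fields(4)[OF A cf, of X Q] by simp
  qed
qed

end

lemma copy_exists:
  assumes inf: "infinite (UNIV :: 'e set)" and fin: "finite (V :: 'e set)"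
  shows "\<exists>f. copyok 3 f V"
proof -
  have "infinite (UNIV - V)" using Diff_infinite_finite[OF fin inf] .
  then obtain g :: "nat \<Rightarrow> 'e" where g: "inj g" "range g \<subseteq> UNIV - V"
    using infinite_countable_subset by blast
  have "finite (V \<times> {..<(3::nat)})" using fin by simp
  then obtain h n where h: "h ` (V \<times> {..<3}) = {i::nat. i < n}" "inj_on h (V \<times> {..<(3::nat)})"
    using finite_imp_inj_to_nat_seg by blast
  have "inj_on g (h ` (V \<times> {..<3}))" using g(1) inj_on_subset by blast
  then have "inj_on (g \<circ> h) (V \<times> {..<3})" using comp_inj_on[OF h(2)] by blast
  moreover have "(g \<circ> h) ` (V \<times> {..<3}) \<inter> V = {}" using g(2) by auto
  ultimately show ?thesis unfolding copyok_def by blast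
qed

context tnames
begin

lemma tc_cases: "fst t < 2 \<Longrightarrow> snd t < 2 \<Longrightarrow> t \<noteq> (0,0) \<Longrightarrow> \<exists>i<3. t = tc i"
proof -
  assume a: "fst t < 2" "snd t < 2" "t \<noteq> (0,0)"
  obtain p q where t: "t = (p, q)" by (cases t)
  then have "p < 2" "q < 2" "(p, q) \<noteq> (0,0)" using a by auto
  then have "(p = 1 \<and> q = 0) \<or> (p = 0 \<and> q = 1) \<or> (p = 1 \<and> q = 1)" by auto
  then show ?thesis
  proof (elim disjE)
    assume "p = 1 \<and> q = 0" then show ?thesis unfolding t by (intro exI[of _ "0::nat"]) (simp add: tc_def)
  next
    assume "p = 0 \<and> q = 1" then show ?thesis unfolding t by (intro exI[of _ "1::nat"]) (simp add: tc_def)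
  next
    assume "p = 1 \<and> q = 1" then show ?thesis unfolding t by (intro exI[of _ "2::nat"]) (simp add: tc_def)
  qed
qed

lemma good_exists:
  assumes inf: "infinite (UNIV :: 'e set)" and L: "laminar U S" and A: "is_structure \<Sigma> A"
    and sub: "substruct (set_system_struct U S) (A :: 'e struct)"
  shows "\<exists>X f. (\<forall>j<5. X j \<subseteq> univ A) \<and> sat (col5 col X A) (\<lambda>_. undefined) (\<lambda>_. {}) fFilter \<and> copyok 3 f (univ A)"
proof -
  have "finite (univ A)" using A unfolding is_structure_def by auto
  then obtain f where cf: "copyok 3 f (univ A)" using copy_exists[OF inf] by blast
  have UA: "U \<subseteq> univ A" using sub unfolding substruct_def set_system_struct_def by simp
  have US: "U \<in> S" using L unfolding laminar_def set_system_def by auto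
  obtain M1 M2 where M: "M1 \<subseteq> U" "M2 \<subseteq> U" "goodcol S M1 M2 U"
    using colouring[OF L US, of "(1,1)"] unfolding NZ_def by auto
  define T where "T = ntyp M1 M2"
  have CCond: "\<forall>Z. internal S Z \<longrightarrow> (\<forall>t'. \<exists>C. lam_child S C Z \<and> T C \<noteq> t')"
  proof (rule allI, rule impI)
    fix Z assume Z: "internal S Z"
    then have "Z \<subseteq> U" using lam_sub[OF L] unfolding internal_def by blast
    then show "\<forall>t'. \<exists>C. lam_child S C Z \<and> T C \<noteq> t'" using M(3) Z unfolding goodcol_def T_def by blast
  qed
  have nz: "internal S Z \<Longrightarrow> T Z \<noteq> (0,0)" for Z
  proof -
    assume Z: "internal S Z"
    then have "Z \<subseteq> U" using lam_sub[OF L] unfolding internal_def by blast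
    then show ?thesis using M(3) Z unfolding goodcol_def T_def by blast
  qed
  define rep where "rep Y = (SOME a. NrelS S T (T Y) a Y)" for Y
  have rep_spec: "internal S Y \<Longrightarrow> NrelS S T (T Y) (rep Y) Y" for Y
    unfolding rep_def using rep_exists[OF L CCond] by (rule someI_ex) 
  have repY: "internal S Y \<Longrightarrow> rep Y \<in> Y" for Y using rep_spec unfolding NrelS_def by blast
  define X where "X j = (if j = 0 then M1 else if j = 1 then M2 else {rep Y | Y. internal S Y \<and> T Y = tc (j - 2)})" for j :: nat
  have X01: "X 0 = M1" "X 1 = M2" unfolding X_def by simp_all
  have Xi: "X (i+2) = {rep Y | Y. internal S Y \<and> T Y = tc i}" for i unfolding X_def by simp
  have TX: "ntyp (X 0) (X 1) = T" unfolding X01 T_def ..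
  have Xs: "\<forall>j<5. X j \<subseteq> univ A"
  proof (intro allI impI)
    fix j :: nat assume "j < 5"
    have "{rep Y | Y. internal S Y \<and> T Y = tc (j - 2)} \<subseteq> U"
      using repY lam_sub[OF L] unfolding internal_def by blast
    then show "X j \<subseteq> univ A" unfolding X_def using M UA by auto
  qed
  interpret lc: lamctx \<Sigma> sl col cp U S A X f
    using L A sub Xs cf by unfold_locales auto
  have F: lc.FiltOK
    unfolding lc.FiltOK_def TX
  proof (intro conjI allI impI)
    fix Y assume I: "internal S Y"
    have "fst (T Y) < 2" "snd (T Y) < 2" unfolding T_def ntyp_def by simp_all
    then obtain i where i: "i < 3" "T Y = tc i" using tc_cases nz[OF I] by blast
    then have "rep Y \<in> X (i+2)" unfolding Xi using I by blast
    then show "\<exists>i<3. \<exists>a. a \<in> X (i+2) \<and> NrelS S T (tc i) a Y" using rep_spec[OF I] i by metis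
  next
    fix i a b Y assume i: "i < 3" and h: "a \<in> X (i+2) \<and> b \<in> X (i+2) \<and> NrelS S T (tc i) a Y \<and> NrelS S T (tc i) b Y"
    obtain Y1 where Y1: "a = rep Y1" "internal S Y1" "T Y1 = tc i" using h unfolding Xi by blast
    obtain Y2 where Y2: "b = rep Y2" "internal S Y2" "T Y2 = tc i" using h unfolding Xi by blast
    have "NrelS S T (tc i) a Y1" using rep_spec[OF Y1(2)] Y1 by simp
    then have "Y1 = Y" using NrelS_fun[OF L] h by blast
    moreover have "NrelS S T (tc i) b Y2" using rep_spec[OF Y2(2)] Y2 by simp
    then have "Y2 = Y" using NrelS_fun[OF L] h by blast
    ultimately show "a = b" using Y1(1) Y2(1) by simp
  qed
  have "sat (col5 col X A) (\<lambda>_. undefined) (\<lambda>_. {}) fFilter" using lc.filter_sem F by simp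
  then show ?thesis using Xs cf by blast
qed

lemma tnames_main:
  assumes inf: "infinite (UNIV :: 'e set)"
  shows "wf_transduction tau \<and> overlay_on \<Sigma> tau TYPE('e) \<and>
     (\<forall>(U :: 'e set) S (A :: 'e struct).
        laminar U S \<and> is_structure \<Sigma> A \<and> substruct (set_system_struct U S) A \<longrightarrow>
          run tau A \<noteq> {} \<and>
          (\<forall>B\<in>run tau A. \<exists>Tr. represents_laminar_tree Tr U S \<and> B = join A Tr))"
proof (intro conjI allI impI)
  show "wf_transduction tau" by (rule wf_tau)
  show "overlay_on \<Sigma> tau TYPE('e)" by (rule overlay_tau)
next
  fix U :: "'e set" and S and A :: "'e struct"
  assume h: "laminar U S \<and> is_structure \<Sigma> A \<and> substruct (set_system_struct U S) A"
  then have L: "laminar U S" and A: "is_structure \<Sigma> A" and sub: "substruct (set_system_struct U S) A" by auto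
  obtain X f where X: "\<forall>j<5. X j \<subseteq> univ A" "sat (col5 col X A) (\<lambda>_. undefined) (\<lambda>_. {}) fFilter" "copyok 3 f (univ A)"
    using good_exists[OF inf L A sub] by blast
  then have "out X f A \<in> run tau A" using run_tau[OF A] by blast
  then show "run tau A \<noteq> {}" by blast
  show "\<forall>B\<in>run tau A. \<exists>Tr. represents_laminar_tree Tr U S \<and> B = join A Tr"
  proof
    fix B assume "B \<in> run tau A"
    then obtain X f where X: "\<forall>j<5. X j \<subseteq> univ A" "sat (col5 col X A) (\<lambda>_. undefined) (\<lambda>_. {}) fFilter"
      "copyok 3 f (univ A)" "B = out X f A"
      using run_tau[OF A] by blast
    interpret lc: lamctx \<Sigma> sl col cp U S A X f
      using L A sub X by unfold_locales auto
    have F: lc.FiltOK using lc.filter_sem X(2) by simp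
    show "\<exists>Tr. represents_laminar_tree Tr U S \<and> B = join A Tr"
      using lc.rep_Tr[OF F] lc.join_eq X(4) by blast
  qed
qed

end

theorem theorem3p1:
  fixes \<Sigma> :: "symbol set"
  assumes "infinite (UNIV :: 'e set)"
    and "finite \<Sigma>"
    and "SET \<in> \<Sigma>"
    and "ancestor \<notin> \<Sigma>"
  shows "\<exists>\<tau>. wf_transduction \<tau> \<and> overlay_on \<Sigma> \<tau> TYPE('e) \<and>
     (\<forall>(U :: 'e set) S (A :: 'e struct).
        laminar U S \<and> is_structure \<Sigma> A \<and> substruct (set_system_struct U S) A \<longrightarrow>
          run \<tau> A \<noteq> {} \<and>
          (\<forall>B\<in>run \<tau> A. \<exists>Tr. represents_laminar_tree Tr U S \<and> B = join A Tr))"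
proof -
  obtain sl where sl: "set sl = \<Sigma>" "distinct sl" using finite_distinct_list[OF assms(2)] by blast
  define nm where "nm Q = (case Q of RelSym s k \<Rightarrow> s | SetSym s k \<Rightarrow> s)" for Q
  define F where "F = nm ` \<Sigma>"
  have finF: "finite F" unfolding F_def using assms(2) by simp
  define N where "N = (\<Sum>s\<in>F. length s)"
  have lenF: "s \<in> F \<Longrightarrow> length s \<le> N" for s unfolding N_def using finF member_le_sum[of s F length] by simp
  define col where "col j = replicate (N + 1 + j) CHR ''a''" for j :: nat
  define cp where "cp i = replicate (N + 1 + i) CHR ''b''" for i :: nat
  have colfr: "RelSym (col j) k \<notin> \<Sigma>" for j k
  proof
    assume "RelSym (col j) k \<in> \<Sigma>"
    then have "col j \<in> F" unfolding F_def nm_def by force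
    then show False using lenF[of "col j"] unfolding col_def by simp
  qed
  have cpfr: "RelSym (cp j) k \<notin> \<Sigma>" for j k
  proof
    assume "RelSym (cp j) k \<in> \<Sigma>"
    then have "cp j \<in> F" unfolding F_def nm_def by force
    then show False using lenF[of "cp j"] unfolding cp_def by simp
  qed
  have ci: "inj_on col {..<5}" unfolding inj_on_def col_def by (metis add_left_cancel length_replicate)
  have pi: "inj_on cp {..<3}" unfolding inj_on_def cp_def by (metis add_left_cancel length_replicate)
  interpret tn: tnames \<Sigma> sl col cp
    using sl assms(3,4) ci pi colfr cpfr by unfold_locales auto
  show ?thesis using tn.tnames_main[OF assms(1)] by blast
qed

end
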